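(* Consider the ellipse $\mathcal{E}_{e_0,c}$ and let $\mu_1(\varphi)=a_0e_h(\varphi)+a_1e_{\tau1}(\varphi)+b_1e_{\tau2}(\varphi)+a_2e_{hr}(\varphi)+b_2e_r(\varphi)$, where $a_0,a_1,b_1,a_2,b_2$ are sufficiently small. Then there exist a constant $C=C(e_0,c)$ and an ellipse $\widetilde{\mathcal{E}}=\mathcal{E}_{e_0,c}+\mu_{\widetilde{\mathcal{E}}}$ such that $\|\mu_1-\mu_{\widetilde{\mathcal{E}}}\|_{C^1}\le C\|\mu_1\|_{C^1}^2$.
   Context: $\mathcal{E}_{e_0,c}$ is the ellipse $x^2/a^2+y^2/b^2=1$, $0<b\le a$, eccentricity $e_0=\sqrt{1-b^2/a^2}\in[0,1)$, semi-focal distance $c=\sqrt{a^2-b^2}$; in elliptic coordinates $x=c\cosh\mu\cos\varphi$, $y=c\sinh\mu\sin\varphi$ it is $\{\mu=\mu_0\}$ with $\cosh\mu_0=1/e_0$. For a $2\pi$-periodic function $\nu$, $\mathcal{E}_{e_0,c}+\nu$ denotes the curve $\{(c\cosh(\mu_0+\nu(\varphi))\cos\varphi,\;c\sinh(\mu_0+\nu(\varphi))\sin\varphi)\}$. Elliptic motions: $e_h(\varphi)=\frac{1}{1-e_0^2\cos^2\varphi}$, $e_{\tau1}=\cos\varphi\,e_h$, $e_{\tau2}=\sin\varphi\,e_h$, $e_r=\sin(2\varphi)e_h$, $e_{hr}=\cos(2\varphi)e_h$. *)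

theory Defs
  imports "HOL-Analysis.Analysis"
begin

text \<open>Elliptic coordinate of the reference ellipse: cosh mu0 = 1/e0.\<close>
definition mu0 :: "real \<Rightarrow> real" where
  "mu0 e0 = arcosh (1 / e0)"

definition perturbed_curve :: "real \<Rightarrow> real \<Rightarrow> (real \<Rightarrow> real) \<Rightarrow> (real \<times> real) set" where
  "perturbed_curve e0 c nu =
     (\<lambda>\<phi>. (c * cosh (mu0 e0 + nu \<phi>) * cos \<phi>, c * sinh (mu0 e0 + nu \<phi>) * sin \<phi>)) ` UNIV"

definition is_ellipse :: "(real \<times> real) set \<Rightarrow> bool" where
  "is_ellipse S \<longleftrightarrow> (\<exists>x0 y0 A B \<theta>. A > 0 \<and> B > 0 \<and>
      S = (\<lambda>t. (x0 + A * cos t * cos \<theta> - B * sin t * sin \<theta>,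
                 y0 + A * cos t * sin \<theta> + B * sin t * cos \<theta>)) ` UNIV)"

definition e_h :: "real \<Rightarrow> real \<Rightarrow> real" where
  "e_h e0 \<phi> = 1 / (1 - e0\<^sup>2 * (cos \<phi>)\<^sup>2)"
definition e_tau1 :: "real \<Rightarrow> real \<Rightarrow> real" where
  "e_tau1 e0 \<phi> = cos \<phi> * e_h e0 \<phi>"
definition e_tau2 :: "real \<Rightarrow> real \<Rightarrow> real" where
  "e_tau2 e0 \<phi> = sin \<phi> * e_h e0 \<phi>"
definition e_r :: "real \<Rightarrow> real \<Rightarrow> real" where
  "e_r e0 \<phi> = sin (2 * \<phi>) * e_h e0 \<phi>"
definition e_hr :: "real \<Rightarrow> real \<Rightarrow> real" where
  "e_hr e0 \<phi> = cos (2 * \<phi>) * e_h e0 \<phi>"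

definition C1_norm :: "(real \<Rightarrow> real) \<Rightarrow> real" where
  "C1_norm f = (SUP \<phi>\<in>{0..2*pi}. \<bar>f \<phi>\<bar>) + (SUP \<phi>\<in>{0..2*pi}. \<bar>deriv f \<phi>\<bar>)"

definition C1_periodic :: "(real \<Rightarrow> real) \<Rightarrow> bool" where
  "C1_periodic f \<longleftrightarrow> (\<forall>x. f differentiable at x) \<and> continuous_on UNIV (deriv f)
      \<and> (\<forall>x. f (x + 2*pi) = f x)"

end

theory Submission
  imports Defs "HOL-Analysis.Analysis"
begin

lemma abs_mul_le: "\<bar>a\<bar> \<le> x \<Longrightarrow> \<bar>b\<bar> \<le> y \<Longrightarrow> \<bar>a * b\<bar> \<le> x * (y::real)"
proof -
  assume h: "\<bar>a\<bar> \<le> x" "\<bar>b\<bar> \<le> y"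
  have "\<bar>a\<bar> * \<bar>b\<bar> \<le> x * y" by (rule mult_mono) (use h in auto)
  thus ?thesis by (simp add: abs_mult)
qed

lemma abs_mul3_le: "\<bar>a\<bar> \<le> x \<Longrightarrow> \<bar>b\<bar> \<le> y \<Longrightarrow> \<bar>d\<bar> \<le> z \<Longrightarrow> \<bar>a * b * d\<bar> \<le> x * y * (z::real)"
  by (rule abs_mul_le, rule abs_mul_le) auto

lemma abs_tri2: "\<bar>a\<bar> \<le> \<bar>a - b\<bar> + \<bar>b::real\<bar>"
  using abs_triangle_ineq[of "a-b" b] by simp

lemma sq_le_of_abs: "\<bar>a::real\<bar> \<le> B \<Longrightarrow> \<bar>a^2\<bar> \<le> B^2"
proof -
  assume h: "\<bar>a\<bar> \<le> B"
  have "\<bar>a\<bar>^2 \<le> B^2" by (rule power_mono) (use h in auto)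
  thus ?thesis by simp
qed

lemma abs_sum5:
  fixes a b c d e :: real
  assumes "\<bar>a\<bar> \<le> A" "\<bar>b\<bar> \<le> B" "\<bar>c\<bar> \<le> C" "\<bar>d\<bar> \<le> D" "\<bar>e\<bar> \<le> E"
  shows "\<bar>a + b + c + d + e\<bar> \<le> A + B + C + D + E"
  using assms abs_triangle_ineq[of "a+b+c+d" e] abs_triangle_ineq[of "a+b+c" d] abs_triangle_ineq[of "a+b" c]
    abs_triangle_ineq[of a b] by linarith

lemma two_abs: "\<bar>q::real\<bar> \<le> t \<Longrightarrow> \<bar>2 * q\<bar> \<le> 2 * t" by simp

lemma lin_bound:
  fixes c C cs x0 t B :: real
  assumes "\<bar>x0\<bar> \<le> t" "t \<le> 1" "\<bar>C\<bar> \<le> Cm" "\<bar>cs\<bar> \<le> 1" "0 < c"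
  shows "\<bar>c * C * cs - x0\<bar> \<le> c * Cm + 1" and "\<bar>c * C * cs\<bar> \<le> c * Cm + 1" and "\<bar>c * C * cs\<bar> \<le> c * Cm"
proof -
  have "\<bar>c * C * cs\<bar> \<le> c * Cm * 1" by (rule abs_mul_le, rule abs_mul_le) (use assms in auto)
  thus "\<bar>c * C * cs - x0\<bar> \<le> c * Cm + 1" "\<bar>c * C * cs\<bar> \<le> c * Cm + 1" "\<bar>c * C * cs\<bar> \<le> c * Cm"
    using assms by linarith+
qed

lemma G_alg:
  fixes C S cs sn ch0 sh0 a0 g0 c p q r x0 y0 :: real
  assumes "S^2 = C^2 - 1" "sn^2 = 1 - cs^2" "ch0^2 = sh0^2 + 1" "a0 * c^2 * ch0^2 = 1" "g0 * c^2 * sh0^2 = 1"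
  shows "((a0+p) * (c * C * cs - x0)^2 + 2 * q * (c * C * cs - x0) * (c * S * sn - y0) + (g0+r) * (c * S * sn - y0)^2 - 1) * (ch0^2 * sh0^2)
    = (C^2 - ch0^2) * (cs^2 * sh0^2 + sn^2 * ch0^2) + (p * (c * C * cs - x0)^2 + 2 * q * (c * C * cs - x0) * (c * S * sn - y0) + r * (c * S * sn - y0)^2
       + a0 * (-2 * c * C * cs * x0 + x0^2) + g0 * (-2 * c * S * sn * y0 + y0^2)) * (ch0^2 * sh0^2)"
  using assms by algebra

lemma Gm_alg:
  fixes C S cs sn ch0 sh0 a0 g0 c p q r x0 y0 :: real
  assumes "a0 * c^2 * ch0^2 = 1" "g0 * c^2 * sh0^2 = 1"
  shows "(2 * (a0+p) * (c * C * cs - x0) * (c * S * cs) + 2 * q * ((c * S * cs) * (c * S * sn - y0) + (c * C * cs - x0) * (c * C * sn))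
          + 2 * (g0+r) * (c * S * sn - y0) * (c * C * sn)) * (ch0^2 * sh0^2)
    = 2 * C * S * (cs^2 * sh0^2 + sn^2 * ch0^2) + (2 * p * (c * C * cs - x0) * (c * S * cs) + 2 * q * ((c * S * cs) * (c * S * sn - y0) + (c * C * cs - x0) * (c * C * sn))
          + 2 * r * (c * S * sn - y0) * (c * C * sn) - 2 * a0 * c * S * cs * x0 - 2 * g0 * c * C * sn * y0) * (ch0^2 * sh0^2)"
  using assms by algebra

lemma Gp_alg:
  fixes C S cs sn ch0 sh0 a0 g0 c p q r x0 y0 :: real
  assumes "S^2 = C^2 - 1" "ch0^2 = sh0^2 + 1" "a0 * c^2 * ch0^2 = 1" "g0 * c^2 * sh0^2 = 1"
  shows "(2 * (a0+p) * (c * C * cs - x0) * (- c * C * sn) + 2 * q * ((- c * C * sn) * (c * S * sn - y0) + (c * C * cs - x0) * (c * S * cs))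
          + 2 * (g0+r) * (c * S * sn - y0) * (c * S * cs)) * (ch0^2 * sh0^2)
    = (C^2 - ch0^2) * (2 * cs * sn * (ch0^2 - sh0^2)) + (2 * p * (c * C * cs - x0) * (- c * C * sn) + 2 * q * ((- c * C * sn) * (c * S * sn - y0) + (c * C * cs - x0) * (c * S * cs))
          + 2 * r * (c * S * sn - y0) * (c * S * cs) + 2 * a0 * c * C * sn * x0 - 2 * g0 * c * S * cs * y0) * (ch0^2 * sh0^2)"
  using assms by algebra

lemma E_bound:
  fixes C S cs sn a0 g0 c p q r x0 y0 t :: real
  assumes bp: "\<bar>p\<bar> \<le> t" and bq: "\<bar>q\<bar> \<le> t" and br: "\<bar>r\<bar> \<le> t" and bx: "\<bar>x0\<bar> \<le> t" and by0: "\<bar>y0\<bar> \<le> t"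
    and t1: "t \<le> 1" and C1: "1 \<le> C" and SC: "\<bar>S\<bar> \<le> C" and bc: "\<bar>cs\<bar> \<le> 1" and bs: "\<bar>sn\<bar> \<le> 1"
    and c0: "0 < c" and a0: "0 \<le> a0" and g0: "0 \<le> g0"
  shows "\<bar>p * (c * C * cs - x0)^2 + 2 * q * (c * C * cs - x0) * (c * S * sn - y0) + r * (c * S * sn - y0)^2
       + a0 * (-2 * c * C * cs * x0 + x0^2) + g0 * (-2 * c * S * sn * y0 + y0^2)\<bar> \<le> (4 * (c+1)^2 + (a0+g0) * (2 * c+1)) * t * C^2"
proof -
  have t0: "0 \<le> t" using bp by linarith
  define B where "B = (c+1) * C"
  have ccc: "\<bar>c * C * cs\<bar> \<le> c * C * 1" by (rule abs_mul_le, rule abs_mul_le) (use assms in auto)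
  have ccs: "\<bar>c * S * sn\<bar> \<le> c * C * 1" by (rule abs_mul_le, rule abs_mul_le) (use assms in auto)
  have hX: "\<bar>c * C * cs - x0\<bar> \<le> B" using ccc bx t1 C1 unfolding B_def by (simp add: algebra_simps; linarith?)
  have hY: "\<bar>c * S * sn - y0\<bar> \<le> B" using ccs by0 t1 C1 unfolding B_def by (simp add: algebra_simps; linarith?)
  have e1: "\<bar>p * (c * C * cs - x0)^2\<bar> \<le> t * B^2" by (rule abs_mul_le[OF bp sq_le_of_abs[OF hX]])
  have e2: "\<bar>2 * q * (c * C * cs - x0) * (c * S * sn - y0)\<bar> \<le> 2 * t * B * B" by (rule abs_mul3_le[OF two_abs[OF bq] hX hY])
  have e3: "\<bar>r * (c * S * sn - y0)^2\<bar> \<le> t * B^2" by (rule abs_mul_le[OF br sq_le_of_abs[OF hY]])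
  have ct: "\<bar>c * C * cs * x0\<bar> \<le> c * C * t" using abs_mul_le[OF ccc bx] by simp
  have cs2: "\<bar>c * S * sn * y0\<bar> \<le> c * C * t" using abs_mul_le[OF ccs by0] by simp
  have xx: "\<bar>x0^2\<bar> \<le> t^2" by (rule sq_le_of_abs[OF bx])
  have yy: "\<bar>y0^2\<bar> \<le> t^2" by (rule sq_le_of_abs[OF by0])
  have "-2 * c * C * cs * x0 + x0^2 = (-2) * (c * C * cs * x0) + x0^2" by (simp add: algebra_simps)
  hence "\<bar>-2 * c * C * cs * x0 + x0^2\<bar> \<le> \<bar>(-2) * (c * C * cs * x0)\<bar> + \<bar>x0^2\<bar>" by (simp only: abs_triangle_ineq)
  also have "\<dots> = 2 * \<bar>c * C * cs * x0\<bar> + \<bar>x0^2\<bar>" by (simp add: abs_mult)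
  also have "\<dots> \<le> 2 * (c * C * t) + t^2" using ct xx by linarith
  also have "\<dots> \<le> (2 * c + 1) * t * C^2"
  proof -
    have "C \<le> C^2" using C1 by (simp add: power2_eq_square)
    hence "c * C * t \<le> c * C^2 * t" using c0 t0 by (simp add: mult_right_mono)
    moreover have "t^2 \<le> t * C^2"
    proof -
      have "t * t \<le> t * 1" by (rule mult_left_mono) (use t0 t1 in auto)
      moreover have "1 * 1 \<le> C * C" by (rule mult_mono) (use C1 in auto)
      hence "t * 1 \<le> t * C^2" using t0 by (intro mult_left_mono) (auto simp: power2_eq_square)
      ultimately show ?thesis by (simp add: power2_eq_square)
    qed
    ultimately show ?thesis by (simp add: algebra_simps)
  qed
  finally have e4: "\<bar>-2 * c * C * cs * x0 + x0^2\<bar> \<le> (2 * c + 1) * t * C^2" .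
  have "-2 * c * S * sn * y0 + y0^2 = (-2) * (c * S * sn * y0) + y0^2" by (simp add: algebra_simps)
  hence "\<bar>-2 * c * S * sn * y0 + y0^2\<bar> \<le> \<bar>(-2) * (c * S * sn * y0)\<bar> + \<bar>y0^2\<bar>" by (simp only: abs_triangle_ineq)
  also have "\<dots> = 2 * \<bar>c * S * sn * y0\<bar> + \<bar>y0^2\<bar>" by (simp add: abs_mult)
  also have "\<dots> \<le> 2 * (c * C * t) + t^2" using cs2 yy by linarith
  also have "\<dots> \<le> (2 * c + 1) * t * C^2"
  proof -
    have "C \<le> C^2" using C1 by (simp add: power2_eq_square)
    hence "c * C * t \<le> c * C^2 * t" using c0 t0 by (simp add: mult_right_mono)
    moreover have "t^2 \<le> t * C^2"
    proof -
      have "t * t \<le> t * 1" by (rule mult_left_mono) (use t0 t1 in auto)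
      moreover have "1 * 1 \<le> C * C" by (rule mult_mono) (use C1 in auto)
      hence "t * 1 \<le> t * C^2" using t0 by (intro mult_left_mono) (auto simp: power2_eq_square)
      ultimately show ?thesis by (simp add: power2_eq_square)
    qed
    ultimately show ?thesis by (simp add: algebra_simps)
  qed
  finally have e5: "\<bar>-2 * c * S * sn * y0 + y0^2\<bar> \<le> (2 * c + 1) * t * C^2" .
  have e4': "\<bar>a0 * (-2 * c * C * cs * x0 + x0^2)\<bar> \<le> a0 * ((2 * c + 1) * t * C^2)"
    by (rule abs_mul_le[OF _ e4]) (use a0 in simp)
  have e5': "\<bar>g0 * (-2 * c * S * sn * y0 + y0^2)\<bar> \<le> g0 * ((2 * c + 1) * t * C^2)"
    by (rule abs_mul_le[OF _ e5]) (use g0 in simp)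
  have fin: "t * B^2 + 2 * t * B * B + t * B^2 + a0 * ((2 * c + 1) * t * C^2) + g0 * ((2 * c + 1) * t * C^2)
      = (4 * (c+1)^2 + (a0+g0) * (2 * c+1)) * t * C^2" unfolding B_def by (simp add: algebra_simps power2_eq_square)
  show ?thesis using abs_sum5[OF e1 e2 e3 e4' e5'] unfolding fin .
qed

lemma bil_bound:
  fixes p q r x0 y0 t B X Y U V z1 z2 K1 K2 a0 g0 :: real
  assumes bp: "\<bar>p\<bar> \<le> t" and bq: "\<bar>q\<bar> \<le> t" and br: "\<bar>r\<bar> \<le> t" and bx: "\<bar>x0\<bar> \<le> t" and by0: "\<bar>y0\<bar> \<le> t"
    and hX: "\<bar>X\<bar> \<le> B" and hY: "\<bar>Y\<bar> \<le> B" and hU: "\<bar>U\<bar> \<le> B" and hV: "\<bar>V\<bar> \<le> B"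
    and h1: "\<bar>z1\<bar> \<le> K1" and h2: "\<bar>z2\<bar> \<le> K2" and a0: "0 \<le> a0" and g0: "0 \<le> g0"
  shows "\<bar>2 * p * X * U + 2 * q * (U * Y + X * V) + 2 * r * Y * V + 2 * a0 * z1 * x0 + 2 * g0 * z2 * y0\<bar>
     \<le> (8 * B^2 + 2 * a0 * K1 + 2 * g0 * K2) * t"
proof -
  have e1: "\<bar>2 * p * X * U\<bar> \<le> 2 * t * B * B" by (rule abs_mul3_le[OF two_abs[OF bp] hX hU])
  have "\<bar>U * Y\<bar> \<le> B * B" by (rule abs_mul_le[OF hU hY])
  moreover have "\<bar>X * V\<bar> \<le> B * B" by (rule abs_mul_le[OF hX hV])
  ultimately have "\<bar>U * Y + X * V\<bar> \<le> 2 * (B * B)" by linarith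
  hence e2: "\<bar>2 * q * (U * Y + X * V)\<bar> \<le> 2 * t * (2 * (B * B))" by (rule abs_mul_le[OF two_abs[OF bq]])
  have e3: "\<bar>2 * r * Y * V\<bar> \<le> 2 * t * B * B" by (rule abs_mul3_le[OF two_abs[OF br] hY hV])
  have e4: "\<bar>2 * a0 * z1 * x0\<bar> \<le> 2 * a0 * K1 * t" by (rule abs_mul3_le[OF _ h1 bx]) (use a0 in simp)
  have e5: "\<bar>2 * g0 * z2 * y0\<bar> \<le> 2 * g0 * K2 * t" by (rule abs_mul3_le[OF _ h2 by0]) (use g0 in simp)
  have fin: "2 * t * B * B + 2 * t * (2 * (B * B)) + 2 * t * B * B + 2 * a0 * K1 * t + 2 * g0 * K2 * t
    = (8 * B^2 + 2 * a0 * K1 + 2 * g0 * K2) * t" by (simp add: algebra_simps power2_eq_square)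
  show ?thesis using abs_sum5[OF e1 e2 e3 e4 e5] unfolding fin .
qed

lemma mvt_between:
  fixes f f' :: "real \<Rightarrow> real"
  assumes "\<And>z. min a b \<le> z \<Longrightarrow> z \<le> max a b \<Longrightarrow> (f has_real_derivative f' z) (at z)"
  shows "\<exists>z. min a b \<le> z \<and> z \<le> max a b \<and> f b - f a = (b - a) * f' z"
proof (cases a b rule: linorder_cases)
  case less
  then obtain z where "a < z" "z < b" "f b - f a = (b - a) * f' z"
    using MVT2[of a b f f'] assms by auto
  thus ?thesis using less by (intro exI[of _ z]) auto
next
  case equal thus ?thesis by (intro exI[of _ a]) auto
next
  case greater
  then obtain z where "b < z" "z < a" "f a - f b = (a - b) * f' z"
    using MVT2[of b a f f'] assms by auto
  hence "f b - f a = (b - a) * f' z" by (simp add: algebra_simps)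
  thus ?thesis using \<open>b < z\<close> \<open>z < a\<close> by (intro exI[of _ z]) auto
qed

lemma deriv_lower:
  fixes f f' :: "real \<Rightarrow> real"
  assumes "a \<le> b" "\<And>z. a \<le> z \<Longrightarrow> z \<le> b \<Longrightarrow> (f has_real_derivative f' z) (at z)"
    "\<And>z. a \<le> z \<Longrightarrow> z \<le> b \<Longrightarrow> k \<le> f' z"
  shows "k * (b - a) \<le> f b - f a"
proof -
  obtain z where z: "min a b \<le> z" "z \<le> max a b" "f b - f a = (b - a) * f' z"
    using mvt_between[of a b f f'] assms by auto
  have "a \<le> z" "z \<le> b" using z assms(1) by auto
  hence "k * (b - a) \<le> f' z * (b - a)" using assms by (intro mult_right_mono) auto
  thus ?thesis using z by (simp add: algebra_simps)
qed

lemma deriv_upper_abs: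
  fixes f f' :: "real \<Rightarrow> real"
  assumes "\<And>z. min a b \<le> z \<Longrightarrow> z \<le> max a b \<Longrightarrow> (f has_real_derivative f' z) (at z)"
    "\<And>z. min a b \<le> z \<Longrightarrow> z \<le> max a b \<Longrightarrow> \<bar>f' z\<bar> \<le> K"
  shows "\<bar>f b - f a\<bar> \<le> K * \<bar>b - a\<bar>"
proof -
  obtain z where z: "min a b \<le> z" "z \<le> max a b" "f b - f a = (b - a) * f' z"
    using mvt_between[of a b f f'] assms by auto
  have "\<bar>f b - f a\<bar> = \<bar>f' z\<bar> * \<bar>b - a\<bar>" using z by (simp add: abs_mult)
  also have "\<dots> \<le> K * \<bar>b - a\<bar>" using assms(2)[OF z(1,2)] by (intro mult_right_mono) auto
  finally show ?thesis .
qed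

lemma tendsto_by_bound:
  fixes g :: "real \<Rightarrow> real"
  assumes "\<And>y. \<bar>g y - l\<bar> \<le> L * \<bar>y - x\<bar>"
  shows "(g \<longlongrightarrow> l) (at x)"
  unfolding LIM_eq
proof (intro allI impI)
  fix e :: real assume e: "0 < e"
  define L' where "L' = \<bar>L\<bar> + 1"
  have L': "0 < L'" unfolding L'_def by simp
  show "\<exists>s>0. \<forall>y. y \<noteq> x \<and> norm (y - x) < s \<longrightarrow> norm (g y - l) < e"
  proof (intro exI[of _ "e / L'"] conjI allI impI)
    show "0 < e / L'" using e L' by simp
    fix y assume y: "y \<noteq> x \<and> norm (y - x) < e / L'"
    have "\<bar>g y - l\<bar> \<le> L' * \<bar>y - x\<bar>"
    proof -
      have "L * \<bar>y - x\<bar> \<le> L' * \<bar>y - x\<bar>" unfolding L'_def by (intro mult_right_mono) auto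
      thus ?thesis using assms[of y] by linarith
    qed
    also have "\<dots> < L' * (e / L')" using y L' by (intro mult_strict_left_mono) auto
    also have "\<dots> = e" using L' by simp
    finally show "norm (g y - l) < e" by simp
  qed
qed

lemma lipschitz_isCont:
  fixes g :: "real \<Rightarrow> real"
  assumes "\<And>y. \<bar>g y - g x\<bar> \<le> L * \<bar>y - x\<bar>"
  shows "isCont g x"
  unfolding isCont_def by (rule tendsto_by_bound[OF assms])

lemma exp_le_quad:
  fixes x :: real assumes "\<bar>x\<bar> \<le> 1" shows "exp x \<le> 1 + x + x^2"
proof (cases "0 \<le> x")
  case True thus ?thesis using exp_bound[of x] assms by simp
next
  case False
  have "1 - x \<le> exp (-x)" using exp_ge_add_one_self[of "-x"] by simp
  hence "exp x \<le> 1/(1-x)" using False by (simp add: exp_minus field_simps)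
  also have "\<dots> \<le> 1 + x + x^2"
  proof -
    have h1: "x * x^2 \<le> 0" using False by (simp add: mult_nonpos_nonneg)
    have h2: "(1 - x) * (1 + x + x^2) = 1 - x * x^2" by (simp add: algebra_simps power2_eq_square)
    have "1 \<le> (1 - x) * (1 + x + x^2)" using h1 h2 by argo
    thus ?thesis using False by (simp add: field_simps)
  qed
  finally show ?thesis .
qed

lemma cosh_eq: "cosh (x::real) = (exp x + exp (-x))/2"
  using cosh_plus_sinh[of x] cosh_minus_sinh[of x] by simp
lemma sinh_eq: "sinh (x::real) = (exp x - exp (-x))/2"
  using cosh_plus_sinh[of x] cosh_minus_sinh[of x] by simp

lemma cosh_quad: assumes "\<bar>x::real\<bar> \<le> 1" shows "cosh x - 1 \<le> x^2"
proof -
  have "exp (-x) \<le> 1 - x + x^2" using exp_le_quad[of "-x"] assms by simp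
  thus ?thesis using exp_le_quad[OF assms] unfolding cosh_eq by argo
qed

lemma sinh_quad: assumes "\<bar>x::real\<bar> \<le> 1" shows "\<bar>sinh x - x\<bar> \<le> x^2"
proof -
  have "exp (-x) \<le> 1 - x + x^2" using exp_le_quad[of "-x"] assms by simp
  moreover have "1 - x \<le> exp (-x)" using exp_ge_add_one_self[of "-x"] by simp
  moreover have "1 + x \<le> exp x" by simp
  ultimately show ?thesis using exp_le_quad[OF assms] unfolding sinh_eq abs_le_iff by argo
qed

locale ell =
  fixes e0 c :: real
  assumes e0pos: "0 < e0" and e0lt1: "e0 < 1" and cpos: "0 < c"
begin

definition m0 :: real where "m0 = mu0 e0"
definition ch0 :: real where "ch0 = cosh m0"
definition sh0 :: real where "sh0 = sinh m0"
definition al0 :: real where "al0 = 1/(c^2 * ch0^2)"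
definition ga0 :: real where "ga0 = 1/(c^2 * sh0^2)"

lemma one_le: "1 \<le> 1/e0" using e0pos e0lt1 by simp
lemma ch0_eq: "ch0 = 1/e0" using one_le by (simp add: ch0_def m0_def mu0_def)
lemma m0_pos: "0 < m0" using one_le e0lt1 e0pos by (simp add: m0_def mu0_def)
lemma sh0_pos: "0 < sh0" using m0_pos by (simp add: sh0_def)
lemma ch0_sh0: "ch0^2 = sh0^2 + 1" by (simp add: ch0_def sh0_def cosh_square_eq)
lemma ch0_ge1: "1 \<le> ch0" by (simp add: ch0_def cosh_real_ge_1)
lemma sh0_lt_ch0: "sh0 < ch0" by (simp add: ch0_def sh0_def sinh_less_cosh_real)
lemma al0_pos: "0 < al0" using cpos ch0_ge1 by (simp add: al0_def)
lemma ga0_pos: "0 < ga0" using cpos sh0_pos by (simp add: ga0_def)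
lemma al0c: "al0 * c^2 = 1/ch0^2" using cpos by (simp add: al0_def)
lemma ga0c: "ga0 * c^2 = 1/sh0^2" using cpos by (simp add: ga0_def)
lemma e0ch0: "e0 * ch0 = 1" using e0pos by (simp add: ch0_eq)

lemma C_expand: "cosh (m0 + m) = ch0 * cosh m + sh0 * sinh m"
  by (simp add: cosh_add ch0_def sh0_def)
lemma S_expand: "sinh (m0 + m) = sh0 * cosh m + ch0 * sinh m"
  by (simp add: sinh_add ch0_def sh0_def algebra_simps)

definition k2 :: real where "k2 = ch0 + sh0"
definition k1 :: real where "k1 = ch0 + k2"

lemma C_second: assumes "\<bar>m\<bar> \<le> 1" shows "\<bar>cosh (m0+m) - ch0 - sh0 * m\<bar> \<le> k2 * m^2"
proof -
  have a: "0 \<le> cosh m - 1" using cosh_real_ge_1[of m] by simp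
  have "\<bar>cosh (m0+m) - ch0 - sh0 * m\<bar> = \<bar>ch0 * (cosh m - 1) + sh0 * (sinh m - m)\<bar>"
    unfolding C_expand by (simp add: algebra_simps)
  also have "\<dots> \<le> ch0 * m^2 + sh0 * m^2"
    using abs_mul_le[of ch0 ch0 "cosh m - 1" "m^2"] abs_mul_le[of sh0 sh0 "sinh m - m" "m^2"]
      a cosh_quad[OF assms] sinh_quad[OF assms] ch0_ge1 sh0_pos by argo
  finally show ?thesis by (simp add: k2_def algebra_simps)
qed

lemma S_second: assumes "\<bar>m\<bar> \<le> 1" shows "\<bar>sinh (m0+m) - sh0 - ch0 * m\<bar> \<le> k2 * m^2"
proof -
  have a: "0 \<le> cosh m - 1" using cosh_real_ge_1[of m] by simp
  have "\<bar>sinh (m0+m) - sh0 - ch0 * m\<bar> = \<bar>sh0 * (cosh m - 1) + ch0 * (sinh m - m)\<bar>"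
    unfolding S_expand by (simp add: algebra_simps)
  also have "\<dots> \<le> sh0 * m^2 + ch0 * m^2"
    using abs_mul_le[of ch0 ch0 "sinh m - m" "m^2"] abs_mul_le[of sh0 sh0 "cosh m - 1" "m^2"]
      a cosh_quad[OF assms] sinh_quad[OF assms] ch0_ge1 sh0_pos by argo
  finally show ?thesis by (simp add: k2_def algebra_simps)
qed

lemma m2_le: assumes "\<bar>m::real\<bar> \<le> 1" shows "m^2 \<le> \<bar>m\<bar>"
proof -
  have "\<bar>m\<bar> * \<bar>m\<bar> \<le> \<bar>m\<bar> * 1" using assms by (intro mult_left_mono) auto
  thus ?thesis by (simp add: power2_eq_square)
qed

lemma k2_pos: "0 < k2" using sh0_pos ch0_ge1 by (simp add: k2_def)

lemma C_first: assumes "\<bar>m\<bar> \<le> 1" shows "\<bar>cosh (m0+m) - ch0\<bar> \<le> k1 * \<bar>m\<bar>"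
proof -
  have "\<bar>sh0 * m\<bar> = sh0 * \<bar>m\<bar>" using sh0_pos by (simp add: abs_mult)
  moreover have "k2 * m^2 \<le> k2 * \<bar>m\<bar>" using m2_le[OF assms] k2_pos by simp
  moreover have "sh0 * \<bar>m\<bar> \<le> ch0 * \<bar>m\<bar>" using sh0_lt_ch0 by (simp add: mult_right_mono)
  moreover have "k1 * \<bar>m\<bar> = ch0 * \<bar>m\<bar> + k2 * \<bar>m\<bar>" by (simp add: k1_def algebra_simps)
  moreover have "\<bar>cosh (m0+m) - ch0\<bar> \<le> \<bar>cosh (m0+m) - ch0 - sh0 * m\<bar> + \<bar>sh0 * m\<bar>"
    by (rule abs_tri2)
  ultimately show ?thesis using C_second[OF assms] by linarith
qed

lemma S_first: assumes "\<bar>m\<bar> \<le> 1" shows "\<bar>sinh (m0+m) - sh0\<bar> \<le> k1 * \<bar>m\<bar>"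
proof -
  have "\<bar>ch0 * m\<bar> = ch0 * \<bar>m\<bar>" using ch0_ge1 by (simp add: abs_mult)
  moreover have "k2 * m^2 \<le> k2 * \<bar>m\<bar>" using m2_le[OF assms] k2_pos by simp
  moreover have "k1 * \<bar>m\<bar> = ch0 * \<bar>m\<bar> + k2 * \<bar>m\<bar>" by (simp add: k1_def algebra_simps)
  moreover have "\<bar>sinh (m0+m) - sh0\<bar> \<le> \<bar>sinh (m0+m) - sh0 - ch0 * m\<bar> + \<bar>ch0 * m\<bar>"
    by (rule abs_tri2)
  ultimately show ?thesis using S_second[OF assms] by linarith
qed

end

lemma abs_sinh_le_cosh: "\<bar>sinh (x::real)\<bar> \<le> cosh x"
proof (cases "0 \<le> x")
  case True thus ?thesis using sinh_less_cosh_real[of x] by simp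
next
  case False
  hence "\<bar>sinh x\<bar> = sinh (-x)" by simp
  also have "\<dots> < cosh (-x)" by (rule sinh_less_cosh_real)
  finally show ?thesis by simp
qed

lemma cosh_le_abs: assumes "\<bar>x\<bar> \<le> y" shows "cosh x \<le> cosh (y::real)"
proof -
  have "cosh x = cosh \<bar>x\<bar>" by (cases "0 \<le> x") auto
  moreover have "cosh \<bar>x\<bar> \<le> cosh y" using assms by (subst cosh_real_nonneg_le_iff) auto
  ultimately show ?thesis by simp
qed

context ell begin

definition Cm :: real where "Cm = cosh (m0 + 1)"
definition Bx :: real where "Bx = c * Cm + 1"
definition r0 :: real where "r0 = min 1 (m0/2)"
definition C1v :: real where "C1v = cosh (m0 + r0)"
definition C2v :: real where "C2v = cosh (m0 - r0)"
definition Kg :: real where "Kg = 4 * (c+1)^2 + (al0+ga0) * (2 * c+1)"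
definition gm :: real where "gm = e0^2 * sinh (m0/2)"
definition Kb :: real where "Kb = 8 * Bx^2 + 2 * al0 * (c * Cm) + 2 * ga0 * (c * Cm)"
definition Ap :: real where "Ap = e0^2 * (1 - ch0^2 / C1v^2)"
definition An :: real where "An = e0^2 * (ch0^2 - C2v^2)"
definition eps0 :: real where
  "eps0 = min (min 1 (Ap / (2 * Kg))) (min (An / (2 * Kg * ch0^2)) (min (gm / Kb) (min (al0 / 4) (ga0 / 4))))"
definition Wd :: real where "Wd = 2 / sh0^2"
definition Kp :: real where "Kp = Cm^2 * Wd + Kb"
definition K0 :: real where "K0 = Kg * ch0^2 / gm"
definition Lnu :: real where "Lnu = Kp / gm"
definition w :: "real \<Rightarrow> real" where "w ph = (cos ph)^2 / ch0^2 + (sin ph)^2 / sh0^2"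
definition wd :: "real \<Rightarrow> real" where "wd ph = 2 * cos ph * sin ph * (1 / sh0^2 - 1 / ch0^2)"

lemma r0_pos: "0 < r0" using m0_pos by (simp add: r0_def)
lemma r0_le1: "r0 \<le> 1" by (simp add: r0_def)
lemma r0_le: "r0 \<le> m0/2" by (simp add: r0_def)
lemma Kg_pos: "0 < Kg"
proof -
  have "0 < 4 * (c+1)^2" using cpos by simp
  moreover have "0 \<le> (al0+ga0) * (2 * c+1)" using al0_pos ga0_pos cpos by simp
  ultimately show ?thesis unfolding Kg_def by (rule add_pos_nonneg)
qed
lemma ch0_pos: "0 < ch0" using ch0_ge1 by simp
lemma C1v_gt: "ch0 < C1v" unfolding C1v_def ch0_def using m0_pos r0_pos by (intro cosh_real_strict_mono) auto
lemma C2v_lt: "C2v < ch0" unfolding C2v_def ch0_def using m0_pos r0_pos r0_le by (intro cosh_real_strict_mono) auto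
lemma C2v_ge1: "1 \<le> C2v" unfolding C2v_def by (rule cosh_real_ge_1)
lemma Ap_pos: "0 < Ap"
proof -
  have "ch0^2 < C1v^2" using C1v_gt ch0_pos by (intro power_strict_mono) auto
  hence "ch0^2 / C1v^2 < 1" using C1v_gt ch0_pos by simp
  thus ?thesis using e0pos by (simp add: Ap_def)
qed
lemma An_pos: "0 < An"
proof -
  have "C2v^2 < ch0^2" using C2v_lt C2v_ge1 by (intro power_strict_mono) auto
  thus ?thesis using e0pos by (simp add: An_def)
qed
lemma gm_pos: "0 < gm" using e0pos m0_pos by (simp add: gm_def)
lemma Cm_ge1: "1 \<le> Cm" unfolding Cm_def by (rule cosh_real_ge_1)
lemma Kb_pos: "0 < Kb"
proof -
  have "0 < c * Cm" using cpos Cm_ge1 by simp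
  hence "0 < Bx" by (simp add: Bx_def)
  hence "0 < 8 * Bx^2" by simp
  moreover have "0 \<le> 2 * al0 * (c * Cm)" "0 \<le> 2 * ga0 * (c * Cm)" using al0_pos ga0_pos cpos Cm_ge1 by simp_all
  ultimately show ?thesis unfolding Kb_def by (intro add_pos_nonneg) auto
qed
lemma eps0_pos: "0 < eps0"
  using Ap_pos An_pos Kg_pos gm_pos Kb_pos al0_pos ga0_pos ch0_pos by (simp add: eps0_def)
lemma eps0_le1: "eps0 \<le> 1" by (simp add: eps0_def min_le_iff_disj)
lemma eps0_Ap: "eps0 \<le> Ap / (2 * Kg)" by (simp add: eps0_def min_le_iff_disj)
lemma eps0_An: "eps0 \<le> An / (2 * Kg * ch0^2)" by (simp add: eps0_def min_le_iff_disj)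
lemma eps0_gm: "eps0 \<le> gm / Kb" by (simp add: eps0_def min_le_iff_disj)
lemma eps0_al: "eps0 \<le> al0 / 4" unfolding eps0_def
  apply (rule order.trans[OF min.cobounded2])
  apply (rule order.trans[OF min.cobounded2])
  apply (rule order.trans[OF min.cobounded2])
  apply (rule min.cobounded1) done
lemma eps0_ga: "eps0 \<le> ga0 / 4" unfolding eps0_def
  apply (rule order.trans[OF min.cobounded2])
  apply (rule order.trans[OF min.cobounded2])
  apply (rule order.trans[OF min.cobounded2])
  apply (rule min.cobounded2) done

lemma band_C: assumes "\<bar>m\<bar> \<le> 1" shows "1 \<le> cosh (m0+m)" "cosh (m0+m) \<le> Cm"
proof -
  show "1 \<le> cosh (m0+m)" by (rule cosh_real_ge_1)
  have "\<bar>m0+m\<bar> \<le> m0+1" using assms m0_pos by linarith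
  thus "cosh (m0+m) \<le> Cm" unfolding Cm_def by (rule cosh_le_abs)
qed
lemma band_S: assumes "\<bar>m\<bar> \<le> 1" shows "\<bar>sinh (m0+m)\<bar> \<le> Cm"
  using abs_sinh_le_cosh[of "m0+m"] band_C[OF assms] by linarith
lemma band_Ca: assumes "\<bar>m\<bar> \<le> 1" shows "\<bar>cosh (m0+m)\<bar> \<le> Cm"
  using band_C[OF assms] by simp
lemma ch0_le_Cm: "ch0 \<le> Cm" using band_C[of 0] by (simp add: ch0_def)

lemma w_ge: "e0^2 \<le> w ph"
proof -
  have "sh0^2 \<le> ch0^2" using ch0_sh0 by simp
  hence "(sin ph)^2 / ch0^2 \<le> (sin ph)^2 / sh0^2" using sh0_pos ch0_pos by (intro divide_left_mono) auto
  moreover have "(cos ph)^2 / ch0^2 + (sin ph)^2 / ch0^2 = e0^2"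
  proof -
    have "(cos ph)^2 / ch0^2 + (sin ph)^2 / ch0^2 = ((cos ph)^2 + (sin ph)^2) / ch0^2" by (rule add_divide_distrib[symmetric])
    also have "\<dots> = 1 / ch0^2" by (metis sin_cos_squared_add add.commute)
    also have "\<dots> = e0^2" using e0pos by (simp add: ch0_eq power_divide)
    finally show ?thesis .
  qed
  ultimately show ?thesis unfolding w_def by linarith
qed
lemma w_pos: "0 < w ph" using w_ge[of ph] e0pos by (smt (verit) zero_less_power)
lemma w_mult: "w ph * (ch0^2 * sh0^2) = (cos ph)^2 * sh0^2 + (sin ph)^2 * ch0^2"
  using ch0_pos sh0_pos by (simp add: w_def field_simps)
lemma wd_mult: "wd ph * (ch0^2 * sh0^2) = 2 * cos ph * sin ph * (ch0^2 - sh0^2)"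
  using ch0_pos sh0_pos by (simp add: wd_def field_simps)
lemma wd_bound: "\<bar>wd ph\<bar> \<le> Wd"
proof -
  have k0: "0 \<le> 1 / sh0^2 - 1 / ch0^2"
  proof -
    have "sh0^2 \<le> ch0^2" using ch0_sh0 by simp
    hence "1 / ch0^2 \<le> 1 / sh0^2" using sh0_pos ch0_pos by (intro divide_left_mono) auto
    thus ?thesis by simp
  qed
  have k1': "1 / sh0^2 - 1 / ch0^2 \<le> 1 / sh0^2" using ch0_pos by simp
  have "\<bar>2 * cos ph * sin ph\<bar> \<le> 2 * 1 * 1" by (rule abs_mul3_le) auto
  hence "\<bar>2 * cos ph * sin ph * (1 / sh0^2 - 1 / ch0^2)\<bar> \<le> (2 * 1 * 1) * (1 / sh0^2)"
    by (rule abs_mul_le) (use k0 k1' in simp)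
  thus ?thesis by (simp add: wd_def Wd_def)
qed
lemma al0_mult: "al0 * c^2 * ch0^2 = 1" using cpos ch0_pos by (simp add: al0_def)
lemma ga0_mult: "ga0 * c^2 * sh0^2 = 1" using cpos sh0_pos by (simp add: ga0_def)
lemma al0_nonneg: "0 \<le> al0" using al0_pos by simp
lemma ga0_nonneg: "0 \<le> ga0" using ga0_pos by simp

end

locale ell2 = ell +
  fixes p q r x0 y0 t :: real
  assumes bp: "\<bar>p\<bar> \<le> t" and bq: "\<bar>q\<bar> \<le> t" and br: "\<bar>r\<bar> \<le> t" and bx: "\<bar>x0\<bar> \<le> t"
    and byy: "\<bar>y0\<bar> \<le> t" and tsm: "t \<le> eps0"
begin

lemma t_nonneg: "0 \<le> t" using bp by linarith
lemma t_le1: "t \<le> 1" using tsm eps0_le1 by linarith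

definition X :: "real \<Rightarrow> real \<Rightarrow> real" where "X ph m = c * cosh (m0+m) * cos ph - x0"
definition Y :: "real \<Rightarrow> real \<Rightarrow> real" where "Y ph m = c * sinh (m0+m) * sin ph - y0"
definition G :: "real \<Rightarrow> real \<Rightarrow> real" where
  "G ph m = (al0+p) * (X ph m)^2 + 2 * q * (X ph m) * (Y ph m) + (ga0+r) * (Y ph m)^2 - 1"
definition Gm :: "real \<Rightarrow> real \<Rightarrow> real" where
  "Gm ph m = 2 * (al0+p) * X ph m * (c * sinh (m0+m) * cos ph)
     + 2 * q * ((c * sinh (m0+m) * cos ph) * Y ph m + X ph m * (c * cosh (m0+m) * sin ph))
     + 2 * (ga0+r) * Y ph m * (c * cosh (m0+m) * sin ph)"
definition Gp :: "real \<Rightarrow> real \<Rightarrow> real" where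
  "Gp ph m = 2 * (al0+p) * X ph m * (- c * cosh (m0+m) * sin ph)
     + 2 * q * ((- c * cosh (m0+m) * sin ph) * Y ph m + X ph m * (c * sinh (m0+m) * cos ph))
     + 2 * (ga0+r) * Y ph m * (c * sinh (m0+m) * cos ph)"
definition E :: "real \<Rightarrow> real \<Rightarrow> real" where
  "E ph m = p * (X ph m)^2 + 2 * q * X ph m * Y ph m + r * (Y ph m)^2
     + al0 * (-2 * c * cosh (m0+m) * cos ph * x0 + x0^2) + ga0 * (-2 * c * sinh (m0+m) * sin ph * y0 + y0^2)"
definition Em :: "real \<Rightarrow> real \<Rightarrow> real" where
  "Em ph m = 2 * p * X ph m * (c * sinh (m0+m) * cos ph)
     + 2 * q * ((c * sinh (m0+m) * cos ph) * Y ph m + X ph m * (c * cosh (m0+m) * sin ph))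
     + 2 * r * Y ph m * (c * cosh (m0+m) * sin ph) - 2 * al0 * c * sinh (m0+m) * cos ph * x0
     - 2 * ga0 * c * cosh (m0+m) * sin ph * y0"
definition Ep :: "real \<Rightarrow> real \<Rightarrow> real" where
  "Ep ph m = 2 * p * X ph m * (- c * cosh (m0+m) * sin ph)
     + 2 * q * ((- c * cosh (m0+m) * sin ph) * Y ph m + X ph m * (c * sinh (m0+m) * cos ph))
     + 2 * r * Y ph m * (c * sinh (m0+m) * cos ph) + 2 * al0 * c * cosh (m0+m) * sin ph * x0
     - 2 * ga0 * c * sinh (m0+m) * cos ph * y0"

lemma kne: "ch0^2 * sh0^2 \<noteq> 0" using ch0_pos sh0_pos by simp

lemma G_split: "G ph m = ((cosh (m0+m))^2 - ch0^2) * w ph + E ph m"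
proof -
  have "G ph m * (ch0^2 * sh0^2) = ((cosh (m0+m))^2 - ch0^2) * (w ph * (ch0^2 * sh0^2)) + E ph m * (ch0^2 * sh0^2)"
    unfolding w_mult G_def E_def X_def Y_def
    by (rule G_alg[OF _ _ ch0_sh0 al0_mult ga0_mult]) (simp_all add: cosh_square_eq sin_squared_eq)
  hence "G ph m * (ch0^2 * sh0^2) = (((cosh (m0+m))^2 - ch0^2) * w ph + E ph m) * (ch0^2 * sh0^2)"
    by (simp add: algebra_simps)
  thus ?thesis using kne by simp
qed

lemma Gm_split: "Gm ph m = 2 * cosh (m0+m) * sinh (m0+m) * w ph + Em ph m"
proof -
  have "Gm ph m * (ch0^2 * sh0^2) = 2 * cosh (m0+m) * sinh (m0+m) * (w ph * (ch0^2 * sh0^2)) + Em ph m * (ch0^2 * sh0^2)"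
    unfolding w_mult Gm_def Em_def X_def Y_def
    by (rule Gm_alg) (simp_all add: al0_mult ga0_mult)
  hence "Gm ph m * (ch0^2 * sh0^2) = (2 * cosh (m0+m) * sinh (m0+m) * w ph + Em ph m) * (ch0^2 * sh0^2)"
    by (simp add: algebra_simps)
  thus ?thesis using kne by simp
qed

lemma Gp_split: "Gp ph m = ((cosh (m0+m))^2 - ch0^2) * wd ph + Ep ph m"
proof -
  have "Gp ph m * (ch0^2 * sh0^2) = ((cosh (m0+m))^2 - ch0^2) * (wd ph * (ch0^2 * sh0^2)) + Ep ph m * (ch0^2 * sh0^2)"
    unfolding wd_mult Gp_def Ep_def X_def Y_def
    by (rule Gp_alg[OF _ ch0_sh0 al0_mult ga0_mult]) (simp add: cosh_square_eq)
  hence "Gp ph m * (ch0^2 * sh0^2) = (((cosh (m0+m))^2 - ch0^2) * wd ph + Ep ph m) * (ch0^2 * sh0^2)"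
    by (simp add: algebra_simps)
  thus ?thesis using kne by simp
qed

lemma G_dm: "((\<lambda>m. G ph m) has_real_derivative Gm ph m) (at m)"
  unfolding G_def Gm_def X_def Y_def
  by (auto intro!: derivative_eq_intros simp: algebra_simps)

lemma G_dp: "((\<lambda>ph. G ph m) has_real_derivative Gp ph m) (at ph)"
  unfolding G_def Gp_def X_def Y_def
  by (auto intro!: derivative_eq_intros simp: algebra_simps)

lemma E_bnd: "\<bar>E ph m\<bar> \<le> Kg * t * (cosh (m0+m))^2"
  unfolding E_def X_def Y_def Kg_def
  by (rule E_bound[OF bp bq br bx byy t_le1 cosh_real_ge_1 abs_sinh_le_cosh abs_cos_le_one abs_sin_le_one cpos al0_nonneg ga0_nonneg])

lemma X_band: "\<bar>m\<bar> \<le> 1 \<Longrightarrow> \<bar>X ph m\<bar> \<le> Bx"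
  unfolding X_def Bx_def by (rule lin_bound(1)[OF bx t_le1 band_Ca abs_cos_le_one cpos])
lemma Y_band: "\<bar>m\<bar> \<le> 1 \<Longrightarrow> \<bar>Y ph m\<bar> \<le> Bx"
  unfolding Y_def Bx_def by (rule lin_bound(1)[OF byy t_le1 band_S abs_sin_le_one cpos])
lemma SC_band: "\<bar>m\<bar> \<le> 1 \<Longrightarrow> \<bar>c * sinh (m0+m) * cos ph\<bar> \<le> Bx"
  unfolding Bx_def by (rule lin_bound(2)[OF bx t_le1 band_S abs_cos_le_one cpos])
lemma CS_band: "\<bar>m\<bar> \<le> 1 \<Longrightarrow> \<bar>c * cosh (m0+m) * sin ph\<bar> \<le> Bx"
  unfolding Bx_def by (rule lin_bound(2)[OF bx t_le1 band_Ca abs_sin_le_one cpos])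
lemma SC_band': "\<bar>m\<bar> \<le> 1 \<Longrightarrow> \<bar>c * sinh (m0+m) * cos ph\<bar> \<le> c * Cm"
  by (rule lin_bound(3)[OF bx t_le1 band_S abs_cos_le_one cpos])
lemma CS_band': "\<bar>m\<bar> \<le> 1 \<Longrightarrow> \<bar>c * cosh (m0+m) * sin ph\<bar> \<le> c * Cm"
  by (rule lin_bound(3)[OF bx t_le1 band_Ca abs_sin_le_one cpos])

lemma Em_bnd: assumes "\<bar>m\<bar> \<le> 1" shows "\<bar>Em ph m\<bar> \<le> Kb * t"
proof -
  have eq: "Em ph m = 2 * p * X ph m * (c * sinh (m0+m) * cos ph)
     + 2 * q * ((c * sinh (m0+m) * cos ph) * Y ph m + X ph m * (c * cosh (m0+m) * sin ph))
     + 2 * r * Y ph m * (c * cosh (m0+m) * sin ph) + 2 * al0 * (- (c * sinh (m0+m) * cos ph)) * x0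
     + 2 * ga0 * (- (c * cosh (m0+m) * sin ph)) * y0"
    unfolding Em_def by (simp add: algebra_simps)
  have h1: "\<bar>- (c * sinh (m0+m) * cos ph)\<bar> \<le> c * Cm" using SC_band'[OF assms] by simp
  have h2: "\<bar>- (c * cosh (m0+m) * sin ph)\<bar> \<le> c * Cm" using CS_band'[OF assms] by simp
  show ?thesis unfolding eq Kb_def
    by (rule bil_bound[OF bp bq br bx byy X_band[OF assms] Y_band[OF assms] SC_band[OF assms] CS_band[OF assms]
          h1 h2 al0_nonneg ga0_nonneg])
qed

lemma Ep_bnd: assumes "\<bar>m\<bar> \<le> 1" shows "\<bar>Ep ph m\<bar> \<le> Kb * t"
proof -
  have eq: "Ep ph m = 2 * p * X ph m * (- (c * cosh (m0+m) * sin ph))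
     + 2 * q * ((- (c * cosh (m0+m) * sin ph)) * Y ph m + X ph m * (c * sinh (m0+m) * cos ph))
     + 2 * r * Y ph m * (c * sinh (m0+m) * cos ph) + 2 * al0 * (c * cosh (m0+m) * sin ph) * x0
     + 2 * ga0 * (- (c * sinh (m0+m) * cos ph)) * y0"
    unfolding Ep_def by (simp add: algebra_simps)
  have h0: "\<bar>- (c * cosh (m0+m) * sin ph)\<bar> \<le> Bx" using CS_band[OF assms] by simp
  have h2: "\<bar>- (c * sinh (m0+m) * cos ph)\<bar> \<le> c * Cm" using SC_band'[OF assms] by simp
  show ?thesis unfolding eq Kb_def
    by (rule bil_bound[OF bp bq br bx byy X_band[OF assms] Y_band[OF assms] h0 SC_band[OF assms]
          CS_band'[OF assms] h2 al0_nonneg ga0_nonneg])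
qed

lemma Gp_bnd: assumes "\<bar>m\<bar> \<le> 1" shows "\<bar>Gp ph m\<bar> \<le> Kp"
proof -
  have C: "1 \<le> cosh (m0+m)" "cosh (m0+m) \<le> Cm" using band_C[OF assms] by auto
  have "(cosh (m0+m))^2 \<le> Cm^2" using C by (intro power_mono) auto
  moreover have "ch0^2 \<le> Cm^2" using ch0_le_Cm ch0_pos by (intro power_mono) auto
  moreover have "0 \<le> (cosh (m0+m))^2" "0 \<le> ch0^2" by simp_all
  ultimately have a: "\<bar>(cosh (m0+m))^2 - ch0^2\<bar> \<le> Cm^2" by linarith
  have b: "\<bar>((cosh (m0+m))^2 - ch0^2) * wd ph\<bar> \<le> Cm^2 * Wd" by (rule abs_mul_le[OF a wd_bound])
  have c: "Kb * t \<le> Kb" using Kb_pos t_le1 by simp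
  have "\<bar>Gp ph m\<bar> \<le> \<bar>((cosh (m0+m))^2 - ch0^2) * wd ph\<bar> + \<bar>Ep ph m\<bar>"
    unfolding Gp_split by (rule abs_triangle_ineq)
  thus ?thesis using b c Ep_bnd[OF assms, of ph] unfolding Kp_def by linarith
qed

lemma w_e0: "((cosh (m0+m))^2 - ch0^2) * e0^2 \<le> ((cosh (m0+m))^2 - ch0^2) * w ph"
  if "ch0^2 \<le> (cosh (m0+m))^2" using that w_ge by (intro mult_left_mono) auto

lemma G_pos: assumes "r0 \<le> m" shows "0 < G ph m"
proof -
  define C where "C = cosh (m0+m)"
  have C1: "C1v \<le> C" unfolding C_def C1v_def using assms m0_pos r0_pos by (subst cosh_real_nonneg_le_iff) auto
  have c1pos: "0 < C1v" using C1v_gt ch0_pos by linarith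
  have a1: "ch0^2 \<le> C1v^2" using C1v_gt ch0_pos by (intro power_mono) auto
  have a2: "C1v^2 \<le> C^2" using C1 c1pos by (intro power_mono) auto
  have a: "(C^2 - ch0^2) * e0^2 \<le> (C^2 - ch0^2) * w ph" unfolding C_def by (rule w_e0) (use a1 a2 C_def in simp)
  have "ch0^2 \<le> ch0^2 * C^2 / C1v^2"
  proof -
    have "ch0^2 * C1v^2 \<le> ch0^2 * C^2" using a2 by (intro mult_left_mono) auto
    thus ?thesis using c1pos by (simp add: field_simps)
  qed
  hence "e0^2 * (ch0^2) \<le> e0^2 * (ch0^2 * C^2 / C1v^2)" by (intro mult_left_mono) auto
  moreover have "Ap * C^2 = e0^2 * C^2 - e0^2 * (ch0^2 * C^2 / C1v^2)" by (simp add: Ap_def algebra_simps)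
  moreover have "(C^2 - ch0^2) * e0^2 = e0^2 * C^2 - e0^2 * ch0^2" by (simp add: algebra_simps)
  ultimately have b: "Ap * C^2 \<le> (C^2 - ch0^2) * e0^2" by linarith
  have c: "\<bar>E ph m\<bar> \<le> Kg * t * C^2" unfolding C_def by (rule E_bnd)
  have "Kg * t \<le> Kg * (Ap / (2 * Kg))" using tsm eps0_Ap Kg_pos by (intro mult_left_mono) auto
  hence "Kg * t \<le> Ap / 2" using Kg_pos by simp
  hence d: "Kg * t * C^2 \<le> Ap / 2 * C^2" by (intro mult_right_mono) auto
  have "1 \<le> C" unfolding C_def by (rule cosh_real_ge_1)
  hence "0 < C^2" by simp
  hence e: "0 < Ap / 2 * C^2" using Ap_pos by simp
  have f: "Ap * C^2 = 2 * (Ap / 2 * C^2)" by simp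
  have "G ph m = (C^2 - ch0^2) * w ph + E ph m" unfolding C_def by (rule G_split)
  thus ?thesis using a b c d e f by linarith
qed

lemma G_neg: assumes "-m0 \<le> m" "m \<le> -r0" shows "G ph m < 0"
proof -
  define C where "C = cosh (m0+m)"
  have C2: "C \<le> C2v" unfolding C_def C2v_def using assms m0_pos r0_pos r0_le by (subst cosh_real_nonneg_le_iff) auto
  have C1: "1 \<le> C" unfolding C_def by (rule cosh_real_ge_1)
  have a1: "C^2 \<le> C2v^2" using C2 C1 by (intro power_mono) auto
  have a2: "C2v^2 \<le> ch0^2" using C2v_lt C2v_ge1 by (intro power_mono) auto
  have neg: "C^2 - ch0^2 \<le> 0" using a1 a2 by linarith
  have a: "(C^2 - ch0^2) * w ph \<le> (C^2 - ch0^2) * e0^2" using neg w_ge by (intro mult_left_mono_neg) auto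
  have b: "(C^2 - ch0^2) * e0^2 \<le> (C2v^2 - ch0^2) * e0^2" using a1 by (intro mult_right_mono) auto
  have b2: "(C2v^2 - ch0^2) * e0^2 = - An" by (simp add: An_def algebra_simps)
  have c: "\<bar>E ph m\<bar> \<le> Kg * t * C^2" unfolding C_def by (rule E_bnd)
  have "Kg * t * C^2 \<le> Kg * t * ch0^2" using a1 a2 Kg_pos t_nonneg by (intro mult_left_mono) auto
  also have "Kg * t * ch0^2 \<le> Kg * (An / (2 * Kg * ch0^2)) * ch0^2"
    using tsm eps0_An Kg_pos by (intro mult_right_mono mult_left_mono) auto
  also have "\<dots> = An / 2" using Kg_pos ch0_pos by simp
  finally have d: "Kg * t * C^2 \<le> An / 2" .
  have "G ph m = (C^2 - ch0^2) * w ph + E ph m" unfolding C_def by (rule G_split)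
  thus ?thesis using a b b2 c d An_pos by linarith
qed

lemma Gm_band: assumes "\<bar>m\<bar> \<le> r0" shows "gm \<le> Gm ph m"
proof -
  have m1: "\<bar>m\<bar> \<le> 1" using assms r0_le1 by linarith
  have C1: "1 \<le> cosh (m0+m)" by (rule cosh_real_ge_1)
  have "m0/2 \<le> m0 + m" using assms r0_le by linarith
  hence S1: "sinh (m0/2) \<le> sinh (m0+m)" by simp
  have s0: "0 < sinh (m0/2)" using m0_pos by simp
  have sp: "0 < sinh (m0+m)" using S1 s0 by linarith
  have cs0: "0 \<le> cosh (m0+m) * sinh (m0+m)" by (intro mult_nonneg_nonneg) (use C1 sp in auto)
  have "1 * sinh (m0/2) \<le> cosh (m0+m) * sinh (m0+m)" using C1 S1 s0 by (intro mult_mono) auto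
  hence "sinh (m0/2) * e0^2 \<le> cosh (m0+m) * sinh (m0+m) * w ph" using w_ge s0 cs0 by (intro mult_mono) auto
  hence a: "2 * gm \<le> 2 * cosh (m0+m) * sinh (m0+m) * w ph" by (simp add: gm_def algebra_simps)
  have "Kb * t \<le> Kb * (gm / Kb)" using tsm eps0_gm Kb_pos by (intro mult_left_mono) auto
  hence b: "Kb * t \<le> gm" using Kb_pos by simp
  show ?thesis using Gm_split[of ph m] a b Em_bnd[OF m1, of ph] by linarith
qed

lemma G_cont_m: "isCont (\<lambda>m. G ph m) m" by (rule DERIV_isCont[OF G_dm])

lemma G_strict: assumes "-r0 \<le> a" "a < b" "b \<le> r0" shows "G ph a < G ph b"
proof (rule DERIV_pos_imp_increasing[OF assms(2)])
  fix x assume "a \<le> x" "x \<le> b"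
  hence "\<bar>x\<bar> \<le> r0" using assms by linarith
  thus "\<exists>y. ((\<lambda>m. G ph m) has_real_derivative y) (at x) \<and> 0 < y"
    using G_dm Gm_band gm_pos by (intro exI[of _ "Gm ph x"]) (auto intro: order.strict_trans2)
qed

lemma nu_ex: "\<exists>m. \<bar>m\<bar> \<le> r0 \<and> G ph m = 0"
proof -
  have "G ph (-r0) < 0" using r0_le m0_pos by (intro G_neg) auto
  moreover have "0 < G ph r0" by (rule G_pos) simp
  ultimately obtain m where "-r0 \<le> m" "m \<le> r0" "G ph m = 0"
    using IVT[of "\<lambda>m. G ph m" "-r0" 0 r0] r0_pos G_cont_m by auto
  thus ?thesis by (intro exI[of _ m]) auto
qed

lemma nu_uniq: assumes "\<bar>a\<bar> \<le> r0" "\<bar>b\<bar> \<le> r0" "G ph a = 0" "G ph b = 0" shows "a = b"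
proof (rule ccontr)
  assume "a \<noteq> b"
  hence "a < b \<or> b < a" by linarith
  thus False using G_strict[of a b ph] G_strict[of b a ph] assms by (auto simp: abs_le_iff)
qed

definition nu :: "real \<Rightarrow> real" where "nu ph = (THE m. \<bar>m\<bar> \<le> r0 \<and> G ph m = 0)"

lemma nu_prop: "\<bar>nu ph\<bar> \<le> r0 \<and> G ph (nu ph) = 0"
proof -
  have "\<exists>!m. \<bar>m\<bar> \<le> r0 \<and> G ph m = 0" using nu_ex nu_uniq by blast
  thus ?thesis unfolding nu_def by (rule theI')
qed
lemma nu_band: "\<bar>nu ph\<bar> \<le> r0" using nu_prop by blast
lemma nu_root: "G ph (nu ph) = 0" using nu_prop by blast
lemma nu_band1: "\<bar>nu ph\<bar> \<le> 1" using nu_band r0_le1 by (rule order.trans)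

lemma nu_global: assumes "-m0 \<le> m" "G ph m = 0" shows "m = nu ph"
proof -
  have "\<bar>m\<bar> \<le> r0"
  proof (rule ccontr)
    assume "\<not> \<bar>m\<bar> \<le> r0"
    hence "r0 \<le> m \<or> m \<le> -r0" by linarith
    thus False using G_pos[of m ph] G_neg[of m ph] assms by auto
  qed
  thus ?thesis using nu_uniq nu_prop assms by blast
qed

lemma G_periodic: "G (ph + 2 * pi) m = G ph m" by (simp add: G_def X_def Y_def)

lemma nu_periodic: "nu (ph + 2 * pi) = nu ph"
  unfolding nu_def G_periodic ..

lemma G_at0: "G ph 0 = E ph 0" using G_split[of ph 0] by (simp add: ch0_def)

lemma nu_small: "\<bar>nu ph\<bar> \<le> K0 * t"
proof -
  have E0: "\<bar>G ph 0\<bar> \<le> Kg * t * ch0^2" using E_bnd[of ph 0] G_at0 by (simp add: ch0_def)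
  have gband: "\<And>z. min 0 (nu ph) \<le> z \<Longrightarrow> z \<le> max 0 (nu ph) \<Longrightarrow> gm \<le> Gm ph z"
  proof -
    fix z assume "min 0 (nu ph) \<le> z" "z \<le> max 0 (nu ph)"
    hence "\<bar>z\<bar> \<le> r0" using nu_band[of ph] r0_pos by (auto simp: abs_le_iff)
    thus "gm \<le> Gm ph z" by (rule Gm_band)
  qed
  have "gm * \<bar>nu ph\<bar> \<le> \<bar>G ph 0\<bar>"
  proof (cases "0 \<le> nu ph")
    case True
    have "gm * (nu ph - 0) \<le> G ph (nu ph) - G ph 0"
      by (rule deriv_lower[OF True]) (use G_dm gband True in auto)
    thus ?thesis using nu_root[of ph] True by simp
  next
    case False
    have "gm * (0 - nu ph) \<le> G ph 0 - G ph (nu ph)"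
      by (rule deriv_lower) (use G_dm gband False in auto)
    thus ?thesis using nu_root[of ph] False by simp
  qed
  hence "gm * \<bar>nu ph\<bar> \<le> Kg * t * ch0^2" using E0 by linarith
  hence "\<bar>nu ph\<bar> \<le> Kg * t * ch0^2 / gm" using gm_pos by (simp add: field_simps)
  thus ?thesis by (simp add: K0_def field_simps)
qed

lemma nu_lip: "\<bar>nu a - nu b\<bar> \<le> Lnu * \<bar>a - b\<bar>"
proof -
  define n1 n2 where "n1 = nu a" and "n2 = nu b"
  have b1: "\<bar>n1\<bar> \<le> r0" "\<bar>n2\<bar> \<le> r0" unfolding n1_def n2_def by (rule nu_band)+
  have gband: "\<And>z. min n1 n2 \<le> z \<Longrightarrow> z \<le> max n1 n2 \<Longrightarrow> gm \<le> Gm b z"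
  proof -
    fix z assume "min n1 n2 \<le> z" "z \<le> max n1 n2"
    hence "\<bar>z\<bar> \<le> r0" using b1 by (auto simp: abs_le_iff)
    thus "gm \<le> Gm b z" by (rule Gm_band)
  qed
  have A: "gm * \<bar>n1 - n2\<bar> \<le> \<bar>G b n1 - G b n2\<bar>"
  proof (cases "n1 \<le> n2")
    case True
    have "gm * (n2 - n1) \<le> G b n2 - G b n1"
      by (rule deriv_lower[OF True]) (use G_dm gband True in auto)
    thus ?thesis using True by (simp add: abs_le_iff abs_if)
  next
    case False
    have "gm * (n1 - n2) \<le> G b n1 - G b n2"
      by (rule deriv_lower) (use G_dm gband False in auto)
    thus ?thesis using False by (simp add: abs_le_iff abs_if)
  qed
  have n1b: "\<bar>n1\<bar> \<le> 1" using b1 r0_le1 by linarith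
  have B: "\<bar>G b n1 - G a n1\<bar> \<le> Kp * \<bar>b - a\<bar>"
    by (rule deriv_upper_abs[of a b "\<lambda>ph. G ph n1" "\<lambda>ph. Gp ph n1"]) (use G_dp Gp_bnd[OF n1b] in auto)
  have r: "G b n2 = 0" "G a n1 = 0" unfolding n1_def n2_def by (rule nu_root)+
  have "gm * \<bar>n1 - n2\<bar> \<le> Kp * \<bar>a - b\<bar>" using A B r by (simp add: abs_minus_commute)
  hence "\<bar>n1 - n2\<bar> \<le> Kp * \<bar>a - b\<bar> / gm" using gm_pos by (simp add: field_simps)
  thus ?thesis unfolding n1_def n2_def Lnu_def by (simp add: field_simps)
qed

lemma nu_cont: "isCont nu x" by (rule lipschitz_isCont[OF nu_lip])

lemma nu_tendsto: "(nu \<longlongrightarrow> nu x) (at x)" using nu_cont by (simp add: isCont_def)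

definition nud :: "real \<Rightarrow> real" where "nud ph = - Gp ph (nu ph) / Gm ph (nu ph)"

lemma Gm_nu_pos: "0 < Gm ph (nu ph)" using Gm_band[OF nu_band] gm_pos by (rule order.strict_trans2[rotated])

lemma Gp_tendsto:
  assumes "(f \<longlongrightarrow> a) F" "(g \<longlongrightarrow> b) F"
  shows "((\<lambda>y. Gp (f y) (g y)) \<longlongrightarrow> Gp a b) F"
proof -
  have c1: "((\<lambda>y. cos (f y)) \<longlongrightarrow> cos a) F" by (rule isCont_tendsto_compose[OF isCont_cos assms(1)])
  have s1: "((\<lambda>y. sin (f y)) \<longlongrightarrow> sin a) F" by (rule isCont_tendsto_compose[OF isCont_sin assms(1)])
  show ?thesis unfolding Gp_def X_def Y_def by (intro tendsto_intros assms c1 s1)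
qed

lemma Gm_tendsto:
  assumes "(f \<longlongrightarrow> a) F" "(g \<longlongrightarrow> b) F"
  shows "((\<lambda>y. Gm (f y) (g y)) \<longlongrightarrow> Gm a b) F"
proof -
  have c1: "((\<lambda>y. cos (f y)) \<longlongrightarrow> cos a) F" by (rule isCont_tendsto_compose[OF isCont_cos assms(1)])
  have s1: "((\<lambda>y. sin (f y)) \<longlongrightarrow> sin a) F" by (rule isCont_tendsto_compose[OF isCont_sin assms(1)])
  show ?thesis unfolding Gm_def X_def Y_def by (intro tendsto_intros assms c1 s1)
qed

lemma nu_deriv: "(nu has_real_derivative nud x) (at x)"
proof -
  have "\<forall>y. \<exists>z. min x y \<le> fst z \<and> fst z \<le> max x y \<and> min (nu x) (nu y) \<le> snd z \<and> snd z \<le> max (nu x) (nu y)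
     \<and> G y (nu y) - G x (nu y) = (y - x) * Gp (fst z) (nu y) \<and> G x (nu y) - G x (nu x) = (nu y - nu x) * Gm x (snd z)"
  proof
    fix y
    obtain z1 where z1: "min x y \<le> z1" "z1 \<le> max x y" "G y (nu y) - G x (nu y) = (y - x) * Gp z1 (nu y)"
      using mvt_between[of x y "\<lambda>ph. G ph (nu y)" "\<lambda>ph. Gp ph (nu y)"] G_dp by blast
    obtain z2 where z2: "min (nu x) (nu y) \<le> z2" "z2 \<le> max (nu x) (nu y)" "G x (nu y) - G x (nu x) = (nu y - nu x) * Gm x z2"
      using mvt_between[of "nu x" "nu y" "\<lambda>m. G x m" "\<lambda>m. Gm x m"] G_dm by blast
    show "\<exists>z. min x y \<le> fst z \<and> fst z \<le> max x y \<and> min (nu x) (nu y) \<le> snd z \<and> snd z \<le> max (nu x) (nu y)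
     \<and> G y (nu y) - G x (nu y) = (y - x) * Gp (fst z) (nu y) \<and> G x (nu y) - G x (nu x) = (nu y - nu x) * Gm x (snd z)"
      using z1 z2 by (intro exI[of _ "(z1, z2)"]) auto
  qed
  then obtain Z where Z: "\<And>y. min x y \<le> fst (Z y) \<and> fst (Z y) \<le> max x y \<and> min (nu x) (nu y) \<le> snd (Z y) \<and> snd (Z y) \<le> max (nu x) (nu y)
     \<and> G y (nu y) - G x (nu y) = (y - x) * Gp (fst (Z y)) (nu y) \<and> G x (nu y) - G x (nu x) = (nu y - nu x) * Gm x (snd (Z y))"
    by metis
  have Z2band: "\<bar>snd (Z y)\<bar> \<le> r0" for y
    using Z[of y] nu_band[of x] nu_band[of y] by (auto simp: abs_le_iff)
  have Z2pos: "0 < Gm x (snd (Z y))" for y using Gm_band[OF Z2band[of y], of x] gm_pos by linarith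
  have Z1lim: "((\<lambda>y. fst (Z y)) \<longlongrightarrow> x) (at x)"
  proof (rule tendsto_by_bound[of _ _ 1])
    fix y show "\<bar>fst (Z y) - x\<bar> \<le> 1 * \<bar>y - x\<bar>" using Z[of y] by (auto simp: abs_le_iff)
  qed
  have Z2lim: "((\<lambda>y. snd (Z y)) \<longlongrightarrow> nu x) (at x)"
  proof (rule tendsto_by_bound[of _ _ Lnu])
    fix y
    have "\<bar>snd (Z y) - nu x\<bar> \<le> \<bar>nu y - nu x\<bar>" using Z[of y] by (auto simp: abs_le_iff)
    also have "\<dots> \<le> Lnu * \<bar>y - x\<bar>" by (rule nu_lip)
    finally show "\<bar>snd (Z y) - nu x\<bar> \<le> Lnu * \<bar>y - x\<bar>" .
  qed
  have L1: "((\<lambda>y. Gp (fst (Z y)) (nu y)) \<longlongrightarrow> Gp x (nu x)) (at x)"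
    by (rule Gp_tendsto[OF Z1lim nu_tendsto])
  have L2: "((\<lambda>y. Gm x (snd (Z y))) \<longlongrightarrow> Gm x (nu x)) (at x)"
    by (rule Gm_tendsto[OF tendsto_const Z2lim])
  have L: "((\<lambda>y. - Gp (fst (Z y)) (nu y) / Gm x (snd (Z y))) \<longlongrightarrow> nud x) (at x)"
    unfolding nud_def using Gm_nu_pos[of x] by (intro tendsto_intros L1 L2) auto
  have ev: "eventually (\<lambda>y. - Gp (fst (Z y)) (nu y) / Gm x (snd (Z y)) = (nu y - nu x) / (y - x)) (at x)"
  proof -
    have "eventually (\<lambda>y. y \<noteq> x) (at x)" by (simp add: eventually_at_filter)
    thus ?thesis
    proof (rule eventually_mono)
      fix y assume yx: "y \<noteq> x"
      have "G y (nu y) = 0" "G x (nu x) = 0" by (rule nu_root)+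
      hence "(y - x) * Gp (fst (Z y)) (nu y) + (nu y - nu x) * Gm x (snd (Z y)) = 0"
        using Z[of y] by linarith
      thus "- Gp (fst (Z y)) (nu y) / Gm x (snd (Z y)) = (nu y - nu x) / (y - x)"
        using yx Z2pos[of y] by (simp add: field_simps)
    qed
  qed
  show ?thesis unfolding has_field_derivative_iff by (rule Lim_transform_eventually[OF L ev])
qed

lemma nud_cont: "isCont nud x"
  unfolding isCont_def nud_def using Gm_nu_pos[of x]
  by (intro tendsto_intros Gp_tendsto Gm_tendsto nu_tendsto tendsto_ident_at) auto

lemma deriv_nu: "deriv nu = nud" using nu_deriv by (intro ext DERIV_imp_deriv)

lemma nu_C1: "C1_periodic nu"
  unfolding C1_periodic_def
proof (intro conjI allI)
  fix x show "nu differentiable at x" using nu_deriv real_differentiable_def by blast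
next
  show "continuous_on UNIV (deriv nu)" unfolding deriv_nu
    by (intro continuous_at_imp_continuous_on ballI nud_cont)
next
  fix x show "nu (x + 2 * pi) = nu x" by (rule nu_periodic)
qed

end

lemma abs_sum2: "\<bar>a\<bar> \<le> A \<Longrightarrow> \<bar>b\<bar> \<le> B \<Longrightarrow> \<bar>a + b\<bar> \<le> A + (B::real)"
  using abs_triangle_ineq[of a b] by linarith
lemma abs_diff2: "\<bar>a\<bar> \<le> A \<Longrightarrow> \<bar>b\<bar> \<le> B \<Longrightarrow> \<bar>a - b\<bar> \<le> A + (B::real)"
  using abs_triangle_ineq4[of a b] by linarith

lemma abs_sum6:
  fixes a b c d e f :: real
  assumes "\<bar>a\<bar> \<le> A" "\<bar>b\<bar> \<le> B" "\<bar>c\<bar> \<le> C" "\<bar>d\<bar> \<le> D" "\<bar>e\<bar> \<le> E" "\<bar>f\<bar> \<le> F"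
  shows "\<bar>a + b + c + d + e + f\<bar> \<le> A + B + C + D + E + F"
  using abs_sum2[OF abs_sum5[OF assms(1-5)] assms(6)] .

lemma u_facts:
  fixes m t :: real
  assumes "0 \<le> t"
  shows "\<bar>m\<bar> \<le> \<bar>m\<bar> + t" "t \<le> \<bar>m\<bar> + t" "0 \<le> \<bar>m\<bar> + t" "m^2 \<le> (\<bar>m\<bar> + t)^2" "t^2 \<le> (\<bar>m\<bar> + t)^2"
    "\<bar>m\<bar> * t \<le> (\<bar>m\<bar> + t)^2" "t * (\<bar>m\<bar> + t) \<le> (\<bar>m\<bar> + t)^2"
proof -
  show a: "\<bar>m\<bar> \<le> \<bar>m\<bar> + t" "t \<le> \<bar>m\<bar> + t" "0 \<le> \<bar>m\<bar> + t" using assms by auto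
  have "\<bar>m\<bar>^2 \<le> (\<bar>m\<bar> + t)^2" using a by (intro power_mono) auto
  thus "m^2 \<le> (\<bar>m\<bar> + t)^2" by simp
  show "t^2 \<le> (\<bar>m\<bar> + t)^2" using a assms by (intro power_mono) auto
  have "\<bar>m\<bar> * t \<le> (\<bar>m\<bar> + t) * (\<bar>m\<bar> + t)" using a assms by (intro mult_mono) auto
  thus "\<bar>m\<bar> * t \<le> (\<bar>m\<bar> + t)^2" by (simp add: power2_eq_square)
  have "t * (\<bar>m\<bar> + t) \<le> (\<bar>m\<bar> + t) * (\<bar>m\<bar> + t)" using a assms by (intro mult_mono) auto
  thus "t * (\<bar>m\<bar> + t) \<le> (\<bar>m\<bar> + t)^2" by (simp add: power2_eq_square)
qed

lemma quad_C:
  fixes C ch0 sh0 m k1 k2 :: real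
  assumes h1: "\<bar>C - ch0\<bar> \<le> k1 * \<bar>m\<bar>" and h2: "\<bar>C - ch0 - sh0 * m\<bar> \<le> k2 * m^2" and ch: "0 \<le> ch0"
  shows "\<bar>C^2 - ch0^2 - 2 * ch0 * sh0 * m\<bar> \<le> (k1^2 + 2 * ch0 * k2) * m^2"
proof -
  have eq: "C^2 - ch0^2 - 2 * ch0 * sh0 * m = (C - ch0)^2 + 2 * ch0 * (C - ch0 - sh0 * m)"
    by (simp add: algebra_simps power2_eq_square)
  have a: "\<bar>(C - ch0)^2\<bar> \<le> (k1 * \<bar>m\<bar>)^2" by (rule sq_le_of_abs[OF h1])
  have b: "\<bar>2 * ch0 * (C - ch0 - sh0 * m)\<bar> \<le> 2 * ch0 * (k2 * m^2)" by (rule abs_mul_le[OF _ h2]) (use ch in simp)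
  have "\<bar>C^2 - ch0^2 - 2 * ch0 * sh0 * m\<bar> \<le> (k1 * \<bar>m\<bar>)^2 + 2 * ch0 * (k2 * m^2)"
    unfolding eq by (rule abs_sum2[OF a b])
  also have "\<dots> = (k1^2 + 2 * ch0 * k2) * m^2" by (simp add: algebra_simps power_mult_distrib)
  finally show ?thesis .
qed

lemma lin_diff:
  fixes c C ch0 cs x0 k1 m t :: real
  assumes "\<bar>C - ch0\<bar> \<le> k1 * \<bar>m\<bar>" "\<bar>cs\<bar> \<le> 1" "0 < c" "\<bar>x0\<bar> \<le> t" "0 \<le> t" "0 \<le> k1"
  shows "\<bar>(c * C * cs - x0) - c * ch0 * cs\<bar> \<le> (c * k1 + 1) * (\<bar>m\<bar> + t)"
    and "\<bar>c * (C - ch0) * cs\<bar> \<le> (c * k1 + 1) * (\<bar>m\<bar> + t)"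
    and "\<bar>c * (C - ch0) * cs\<bar> \<le> c * k1 * \<bar>m\<bar>"
proof -
  have a: "\<bar>c * (C - ch0) * cs\<bar> \<le> c * (k1 * \<bar>m\<bar>) * 1" by (rule abs_mul3_le) (use assms in auto)
  show c3: "\<bar>c * (C - ch0) * cs\<bar> \<le> c * k1 * \<bar>m\<bar>" using a by simp
  have k: "c * k1 * \<bar>m\<bar> \<le> c * k1 * (\<bar>m\<bar> + t)" using assms by (intro mult_left_mono) auto
  have e: "(c * k1 + 1) * (\<bar>m\<bar> + t) = c * k1 * (\<bar>m\<bar> + t) + (\<bar>m\<bar> + t)" by (simp add: algebra_simps)
  have e1: "(c * C * cs - x0) - c * ch0 * cs = c * (C - ch0) * cs - x0" by (simp add: algebra_simps)
  have b1: "\<bar>c * (C - ch0) * cs - x0\<bar> \<le> c * k1 * \<bar>m\<bar> + t" by (rule abs_diff2[OF c3 assms(4)])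
  have tt: "0 \<le> \<bar>m\<bar>" by simp
  show "\<bar>(c * C * cs - x0) - c * ch0 * cs\<bar> \<le> (c * k1 + 1) * (\<bar>m\<bar> + t)"
    unfolding e1 using b1 k e tt by linarith
  show "\<bar>c * (C - ch0) * cs\<bar> \<le> (c * k1 + 1) * (\<bar>m\<bar> + t)"
    using c3 k e tt assms(5) by linarith
qed

lemma prod_diff:
  fixes X X0 Y Y0 B K u :: real
  assumes "\<bar>X - X0\<bar> \<le> K * u" "\<bar>Y - Y0\<bar> \<le> K * u" "\<bar>Y\<bar> \<le> B" "\<bar>X0\<bar> \<le> B" "0 \<le> K" "0 \<le> u" "0 \<le> B"
  shows "\<bar>X * Y - X0 * Y0\<bar> \<le> 2 * K * B * u"
proof -
  have eq: "X * Y - X0 * Y0 = (X - X0) * Y + X0 * (Y - Y0)" by (simp add: algebra_simps)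
  have "\<bar>(X - X0) * Y\<bar> \<le> K * u * B" by (rule abs_mul_le) (use assms in auto)
  moreover have "\<bar>X0 * (Y - Y0)\<bar> \<le> B * (K * u)" by (rule abs_mul_le) (use assms in auto)
  ultimately have "\<bar>X * Y - X0 * Y0\<bar> \<le> K * u * B + B * (K * u)" unfolding eq by (rule abs_sum2)
  thus ?thesis by (simp add: algebra_simps)
qed

lemma scale_u: "0 \<le> K \<Longrightarrow> a \<le> u2 \<Longrightarrow> K * a \<le> K * (u2::real)" by (rule mult_left_mono)

lemma R_gen:
  fixes p q r x0 y0 t C S ch0 sh0 cs sn c a0 g0 m w0 k1 k2 Bx Wm :: real
  assumes bp: "\<bar>p\<bar> \<le> t" and bq: "\<bar>q\<bar> \<le> t" and br: "\<bar>r\<bar> \<le> t" and bx: "\<bar>x0\<bar> \<le> t" and by0: "\<bar>y0\<bar> \<le> t"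
    and cs1: "\<bar>cs\<bar> \<le> 1" and sn1: "\<bar>sn\<bar> \<le> 1" and c0: "0 < c" and a0: "0 \<le> a0" and g0: "0 \<le> g0"
    and hC: "\<bar>C - ch0\<bar> \<le> k1 * \<bar>m\<bar>" and hS: "\<bar>S - sh0\<bar> \<le> k1 * \<bar>m\<bar>" and hC2: "\<bar>C - ch0 - sh0 * m\<bar> \<le> k2 * m^2"
    and ch: "0 \<le> ch0" and k1: "0 \<le> k1" and k2: "0 \<le> k2"
    and hX: "\<bar>c * C * cs - x0\<bar> \<le> Bx" and hY: "\<bar>c * S * sn - y0\<bar> \<le> Bx"
    and hX0: "\<bar>c * ch0 * cs\<bar> \<le> Bx" and hY0: "\<bar>c * sh0 * sn\<bar> \<le> Bx" and hw: "\<bar>w0\<bar> \<le> Wm"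
  shows "\<bar>(C^2 - ch0^2 - 2 * ch0 * sh0 * m) * w0 + p * ((c * C * cs - x0)^2 - (c * ch0 * cs)^2)
     + 2 * q * ((c * C * cs - x0) * (c * S * sn - y0) - (c * ch0 * cs) * (c * sh0 * sn))
     + r * ((c * S * sn - y0)^2 - (c * sh0 * sn)^2) + a0 * (-2 * c * (C - ch0) * cs * x0 + x0^2)
     + g0 * (-2 * c * (S - sh0) * sn * y0 + y0^2)\<bar>
   \<le> ((k1^2 + 2 * ch0 * k2) * Wm + 8 * (c * k1 + 1) * Bx + (a0 + g0) * (2 * c * k1 + 1)) * (\<bar>m\<bar> + t)^2"
proof -
  have t0: "0 \<le> t" using bp by linarith
  note U = u_facts[OF t0, of m]
  define u where "u = \<bar>m\<bar> + t"
  define kx where "kx = c * k1 + 1"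
  have kx0: "0 \<le> kx" using c0 k1 unfolding kx_def by simp
  have B0: "0 \<le> Bx" using hX by linarith
  have Wm0: "0 \<le> Wm" using hw by linarith
  have dX: "\<bar>(c * C * cs - x0) - c * ch0 * cs\<bar> \<le> kx * u" unfolding kx_def u_def by (rule lin_diff(1)[OF hC cs1 c0 bx t0 k1])
  have dY: "\<bar>(c * S * sn - y0) - c * sh0 * sn\<bar> \<le> kx * u" unfolding kx_def u_def by (rule lin_diff(1)[OF hS sn1 c0 by0 t0 k1])
  have q1: "\<bar>C^2 - ch0^2 - 2 * ch0 * sh0 * m\<bar> \<le> (k1^2 + 2 * ch0 * k2) * m^2" by (rule quad_C[OF hC hC2 ch])
  have "\<bar>(C^2 - ch0^2 - 2 * ch0 * sh0 * m) * w0\<bar> \<le> ((k1^2 + 2 * ch0 * k2) * m^2) * Wm" by (rule abs_mul_le[OF q1 hw])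
  also have "\<dots> = ((k1^2 + 2 * ch0 * k2) * Wm) * m^2" by simp
  also have "\<dots> \<le> ((k1^2 + 2 * ch0 * k2) * Wm) * u^2" unfolding u_def using U(4) ch k2 Wm0 by (intro scale_u) auto
  finally have T1: "\<bar>(C^2 - ch0^2 - 2 * ch0 * sh0 * m) * w0\<bar> \<le> ((k1^2 + 2 * ch0 * k2) * Wm) * u^2" .
  have pXX: "\<bar>(c * C * cs - x0) * (c * C * cs - x0) - (c * ch0 * cs) * (c * ch0 * cs)\<bar> \<le> 2 * kx * Bx * u"
    by (rule prod_diff[OF dX dX hX hX0 kx0 _ B0]) (simp add: u_def t0)
  have pYY: "\<bar>(c * S * sn - y0) * (c * S * sn - y0) - (c * sh0 * sn) * (c * sh0 * sn)\<bar> \<le> 2 * kx * Bx * u"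
    by (rule prod_diff[OF dY dY hY hY0 kx0 _ B0]) (simp add: u_def t0)
  have pXY: "\<bar>(c * C * cs - x0) * (c * S * sn - y0) - (c * ch0 * cs) * (c * sh0 * sn)\<bar> \<le> 2 * kx * Bx * u"
    by (rule prod_diff[OF dX dY hY hX0 kx0 _ B0]) (simp add: u_def t0)
  have tu: "t * u \<le> u^2" unfolding u_def by (rule U(7))
  have "\<bar>p * ((c * C * cs - x0)^2 - (c * ch0 * cs)^2)\<bar> \<le> t * (2 * kx * Bx * u)"
    by (rule abs_mul_le[OF bp]) (use pXX in \<open>simp add: power2_eq_square\<close>)
  also have "\<dots> = (2 * kx * Bx) * (t * u)" by simp
  also have "\<dots> \<le> (2 * kx * Bx) * u^2" using kx0 B0 tu by (intro scale_u) auto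
  finally have T2: "\<bar>p * ((c * C * cs - x0)^2 - (c * ch0 * cs)^2)\<bar> \<le> (2 * kx * Bx) * u^2" .
  have "\<bar>r * ((c * S * sn - y0)^2 - (c * sh0 * sn)^2)\<bar> \<le> t * (2 * kx * Bx * u)"
    by (rule abs_mul_le[OF br]) (use pYY in \<open>simp add: power2_eq_square\<close>)
  also have "\<dots> = (2 * kx * Bx) * (t * u)" by simp
  also have "\<dots> \<le> (2 * kx * Bx) * u^2" using kx0 B0 tu by (intro scale_u) auto
  finally have T4: "\<bar>r * ((c * S * sn - y0)^2 - (c * sh0 * sn)^2)\<bar> \<le> (2 * kx * Bx) * u^2" .
  have "\<bar>2 * q * ((c * C * cs - x0) * (c * S * sn - y0) - (c * ch0 * cs) * (c * sh0 * sn))\<bar> \<le> (2 * t) * (2 * kx * Bx * u)"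
    by (rule abs_mul_le[OF two_abs[OF bq] pXY])
  also have "\<dots> = (4 * kx * Bx) * (t * u)" by simp
  also have "\<dots> \<le> (4 * kx * Bx) * u^2" using kx0 B0 tu by (intro scale_u) auto
  finally have T3: "\<bar>2 * q * ((c * C * cs - x0) * (c * S * sn - y0) - (c * ch0 * cs) * (c * sh0 * sn))\<bar> \<le> (4 * kx * Bx) * u^2" .
  have mt: "\<bar>m\<bar> * t \<le> u^2" unfolding u_def by (rule U(6))
  have t2: "t^2 \<le> u^2" unfolding u_def by (rule U(5))
  have l5: "\<bar>c * (C - ch0) * cs\<bar> \<le> c * k1 * \<bar>m\<bar>" by (rule lin_diff(3)[OF hC cs1 c0 bx t0 k1])
  have l6: "\<bar>c * (S - sh0) * sn\<bar> \<le> c * k1 * \<bar>m\<bar>" by (rule lin_diff(3)[OF hS sn1 c0 by0 t0 k1])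
  have e5: "-2 * c * (C - ch0) * cs * x0 + x0^2 = (-2) * (c * (C - ch0) * cs) * x0 + x0^2" by simp
  have e6: "-2 * c * (S - sh0) * sn * y0 + y0^2 = (-2) * (c * (S - sh0) * sn) * y0 + y0^2" by simp
  have "\<bar>(-2) * (c * (C - ch0) * cs) * x0\<bar> \<le> 2 * (c * k1 * \<bar>m\<bar>) * t" by (rule abs_mul3_le[OF _ l5 bx]) simp
  moreover have "\<bar>x0^2\<bar> \<le> t^2" by (rule sq_le_of_abs[OF bx])
  ultimately have "\<bar>-2 * c * (C - ch0) * cs * x0 + x0^2\<bar> \<le> 2 * (c * k1 * \<bar>m\<bar>) * t + t^2" unfolding e5 by (rule abs_sum2)
  also have "\<dots> = (2 * c * k1) * (\<bar>m\<bar> * t) + t^2" by simp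
  also have "\<dots> \<le> (2 * c * k1) * u^2 + u^2"
  proof -
    have "(2 * c * k1) * (\<bar>m\<bar> * t) \<le> (2 * c * k1) * u^2" by (rule scale_u) (use c0 k1 mt in auto)
    thus ?thesis using t2 by linarith
  qed
  finally have "\<bar>-2 * c * (C - ch0) * cs * x0 + x0^2\<bar> \<le> (2 * c * k1 + 1) * u^2" by (simp add: algebra_simps)
  hence T5: "\<bar>a0 * (-2 * c * (C - ch0) * cs * x0 + x0^2)\<bar> \<le> a0 * ((2 * c * k1 + 1) * u^2)"
    by (intro abs_mul_le) (use a0 in simp_all)
  have "\<bar>(-2) * (c * (S - sh0) * sn) * y0\<bar> \<le> 2 * (c * k1 * \<bar>m\<bar>) * t" by (rule abs_mul3_le[OF _ l6 by0]) simp
  moreover have "\<bar>y0^2\<bar> \<le> t^2" by (rule sq_le_of_abs[OF by0])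
  ultimately have "\<bar>-2 * c * (S - sh0) * sn * y0 + y0^2\<bar> \<le> 2 * (c * k1 * \<bar>m\<bar>) * t + t^2" unfolding e6 by (rule abs_sum2)
  also have "\<dots> = (2 * c * k1) * (\<bar>m\<bar> * t) + t^2" by simp
  also have "\<dots> \<le> (2 * c * k1) * u^2 + u^2"
  proof -
    have "(2 * c * k1) * (\<bar>m\<bar> * t) \<le> (2 * c * k1) * u^2" by (rule scale_u) (use c0 k1 mt in auto)
    thus ?thesis using t2 by linarith
  qed
  finally have "\<bar>-2 * c * (S - sh0) * sn * y0 + y0^2\<bar> \<le> (2 * c * k1 + 1) * u^2" by (simp add: algebra_simps)
  hence T6: "\<bar>g0 * (-2 * c * (S - sh0) * sn * y0 + y0^2)\<bar> \<le> g0 * ((2 * c * k1 + 1) * u^2)"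
    by (intro abs_mul_le) (use g0 in simp_all)
  have "((k1^2 + 2 * ch0 * k2) * Wm) * u^2 + (2 * kx * Bx) * u^2 + (4 * kx * Bx) * u^2 + (2 * kx * Bx) * u^2
     + a0 * ((2 * c * k1 + 1) * u^2) + g0 * ((2 * c * k1 + 1) * u^2)
    = ((k1^2 + 2 * ch0 * k2) * Wm + 8 * (c * k1 + 1) * Bx + (a0 + g0) * (2 * c * k1 + 1)) * (\<bar>m\<bar> + t)^2"
    unfolding u_def kx_def by (simp add: algebra_simps)
  thus ?thesis using abs_sum6[OF T1 T2 T3 T4 T5 T6] by simp
qed

lemma Rp_gen:
  fixes p q r x0 y0 t C S ch0 sh0 cs sn c a0 g0 m wd0 k1 k2 Bx Wd :: real
  assumes bp: "\<bar>p\<bar> \<le> t" and bq: "\<bar>q\<bar> \<le> t" and br: "\<bar>r\<bar> \<le> t" and bx: "\<bar>x0\<bar> \<le> t" and by0: "\<bar>y0\<bar> \<le> t"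
    and cs1: "\<bar>cs\<bar> \<le> 1" and sn1: "\<bar>sn\<bar> \<le> 1" and c0: "0 < c" and a0: "0 \<le> a0" and g0: "0 \<le> g0"
    and hC: "\<bar>C - ch0\<bar> \<le> k1 * \<bar>m\<bar>" and hS: "\<bar>S - sh0\<bar> \<le> k1 * \<bar>m\<bar>" and hC2: "\<bar>C - ch0 - sh0 * m\<bar> \<le> k2 * m^2"
    and ch: "0 \<le> ch0" and k1: "0 \<le> k1" and k2: "0 \<le> k2"
    and hX: "\<bar>c * C * cs - x0\<bar> \<le> Bx" and hY: "\<bar>c * S * sn - y0\<bar> \<le> Bx"
    and hX0: "\<bar>c * ch0 * cs\<bar> \<le> Bx" and hY0: "\<bar>c * sh0 * sn\<bar> \<le> Bx"
    and hXp: "\<bar>- (c * C * sn)\<bar> \<le> Bx" and hYp: "\<bar>c * S * cs\<bar> \<le> Bx"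
    and hX0p: "\<bar>- (c * ch0 * sn)\<bar> \<le> Bx" and hY0p: "\<bar>c * sh0 * cs\<bar> \<le> Bx" and hw: "\<bar>wd0\<bar> \<le> Wd"
  shows "\<bar>(C^2 - ch0^2 - 2 * ch0 * sh0 * m) * wd0
     + 2 * p * ((c * C * cs - x0) * (- (c * C * sn)) - (c * ch0 * cs) * (- (c * ch0 * sn)))
     + 2 * q * (((- (c * C * sn)) * (c * S * sn - y0) - (- (c * ch0 * sn)) * (c * sh0 * sn))
                + ((c * C * cs - x0) * (c * S * cs) - (c * ch0 * cs) * (c * sh0 * cs)))
     + 2 * r * ((c * S * sn - y0) * (c * S * cs) - (c * sh0 * sn) * (c * sh0 * cs))
     + 2 * a0 * (c * (C - ch0) * sn) * x0 + (- 2 * g0 * (c * (S - sh0) * cs) * y0)\<bar>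
   \<le> ((k1^2 + 2 * ch0 * k2) * Wd + 16 * (c * k1 + 1) * Bx + 2 * (a0 + g0) * c * k1) * (\<bar>m\<bar> + t)^2"
proof -
  have t0: "0 \<le> t" using bp by linarith
  note U = u_facts[OF t0, of m]
  define u where "u = \<bar>m\<bar> + t"
  define kx where "kx = c * k1 + 1"
  have kx0: "0 \<le> kx" using c0 k1 unfolding kx_def by simp
  have B0: "0 \<le> Bx" using hX by linarith
  have Wd0: "0 \<le> Wd" using hw by linarith
  have u0: "0 \<le> u" unfolding u_def using t0 by simp
  have dX: "\<bar>(c * C * cs - x0) - c * ch0 * cs\<bar> \<le> kx * u" unfolding kx_def u_def by (rule lin_diff(1)[OF hC cs1 c0 bx t0 k1])
  have dY: "\<bar>(c * S * sn - y0) - c * sh0 * sn\<bar> \<le> kx * u" unfolding kx_def u_def by (rule lin_diff(1)[OF hS sn1 c0 by0 t0 k1])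
  have dXp0: "\<bar>c * (C - ch0) * sn\<bar> \<le> kx * u" unfolding kx_def u_def by (rule lin_diff(2)[OF hC sn1 c0 bx t0 k1])
  have dXp: "\<bar>(- (c * C * sn)) - (- (c * ch0 * sn))\<bar> \<le> kx * u"
  proof -
    have "(- (c * C * sn)) - (- (c * ch0 * sn)) = - (c * (C - ch0) * sn)" by (simp add: algebra_simps)
    thus ?thesis using dXp0 by simp
  qed
  have dYp: "\<bar>c * S * cs - c * sh0 * cs\<bar> \<le> kx * u"
  proof -
    have "c * S * cs - c * sh0 * cs = c * (S - sh0) * cs" by (simp add: algebra_simps)
    thus ?thesis unfolding kx_def u_def using lin_diff(2)[OF hS cs1 c0 bx t0 k1] by simp
  qed
  have q1: "\<bar>C^2 - ch0^2 - 2 * ch0 * sh0 * m\<bar> \<le> (k1^2 + 2 * ch0 * k2) * m^2" by (rule quad_C[OF hC hC2 ch])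
  have "\<bar>(C^2 - ch0^2 - 2 * ch0 * sh0 * m) * wd0\<bar> \<le> ((k1^2 + 2 * ch0 * k2) * m^2) * Wd" by (rule abs_mul_le[OF q1 hw])
  also have "\<dots> = ((k1^2 + 2 * ch0 * k2) * Wd) * m^2" by simp
  also have "\<dots> \<le> ((k1^2 + 2 * ch0 * k2) * Wd) * u^2" unfolding u_def using U(4) ch k2 Wd0 by (intro scale_u) auto
  finally have T1: "\<bar>(C^2 - ch0^2 - 2 * ch0 * sh0 * m) * wd0\<bar> \<le> ((k1^2 + 2 * ch0 * k2) * Wd) * u^2" .
  have tu: "t * u \<le> u^2" unfolding u_def by (rule U(7))
  have P1: "\<bar>(c * C * cs - x0) * (- (c * C * sn)) - (c * ch0 * cs) * (- (c * ch0 * sn))\<bar> \<le> 2 * kx * Bx * u"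
    by (rule prod_diff[OF dX dXp hXp hX0 kx0 u0 B0])
  have P2: "\<bar>(- (c * C * sn)) * (c * S * sn - y0) - (- (c * ch0 * sn)) * (c * sh0 * sn)\<bar> \<le> 2 * kx * Bx * u"
    by (rule prod_diff[OF dXp dY hY hX0p kx0 u0 B0])
  have P3: "\<bar>(c * C * cs - x0) * (c * S * cs) - (c * ch0 * cs) * (c * sh0 * cs)\<bar> \<le> 2 * kx * Bx * u"
    by (rule prod_diff[OF dX dYp hYp hX0 kx0 u0 B0])
  have P4: "\<bar>(c * S * sn - y0) * (c * S * cs) - (c * sh0 * sn) * (c * sh0 * cs)\<bar> \<le> 2 * kx * Bx * u"
    by (rule prod_diff[OF dY dYp hYp hY0 kx0 u0 B0])
  have "\<bar>2 * p * ((c * C * cs - x0) * (- (c * C * sn)) - (c * ch0 * cs) * (- (c * ch0 * sn)))\<bar> \<le> (2 * t) * (2 * kx * Bx * u)"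
    by (rule abs_mul_le[OF two_abs[OF bp] P1])
  also have "\<dots> = (4 * kx * Bx) * (t * u)" by simp
  also have "\<dots> \<le> (4 * kx * Bx) * u^2" using kx0 B0 tu by (intro scale_u) auto
  finally have T2: "\<bar>2 * p * ((c * C * cs - x0) * (- (c * C * sn)) - (c * ch0 * cs) * (- (c * ch0 * sn)))\<bar> \<le> (4 * kx * Bx) * u^2" .
  have P23: "\<bar>((- (c * C * sn)) * (c * S * sn - y0) - (- (c * ch0 * sn)) * (c * sh0 * sn))
                + ((c * C * cs - x0) * (c * S * cs) - (c * ch0 * cs) * (c * sh0 * cs))\<bar> \<le> 2 * kx * Bx * u + 2 * kx * Bx * u"
    by (rule abs_sum2[OF P2 P3])
  have "\<bar>2 * q * (((- (c * C * sn)) * (c * S * sn - y0) - (- (c * ch0 * sn)) * (c * sh0 * sn))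
                + ((c * C * cs - x0) * (c * S * cs) - (c * ch0 * cs) * (c * sh0 * cs)))\<bar> \<le> (2 * t) * (2 * kx * Bx * u + 2 * kx * Bx * u)"
    by (rule abs_mul_le[OF two_abs[OF bq] P23])
  also have "\<dots> = (8 * kx * Bx) * (t * u)" by (simp add: algebra_simps)
  also have "\<dots> \<le> (8 * kx * Bx) * u^2" using kx0 B0 tu by (intro scale_u) auto
  finally have T3: "\<bar>2 * q * (((- (c * C * sn)) * (c * S * sn - y0) - (- (c * ch0 * sn)) * (c * sh0 * sn))
                + ((c * C * cs - x0) * (c * S * cs) - (c * ch0 * cs) * (c * sh0 * cs)))\<bar> \<le> (8 * kx * Bx) * u^2" .
  have "\<bar>2 * r * ((c * S * sn - y0) * (c * S * cs) - (c * sh0 * sn) * (c * sh0 * cs))\<bar> \<le> (2 * t) * (2 * kx * Bx * u)"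
    by (rule abs_mul_le[OF two_abs[OF br] P4])
  also have "\<dots> = (4 * kx * Bx) * (t * u)" by simp
  also have "\<dots> \<le> (4 * kx * Bx) * u^2" using kx0 B0 tu by (intro scale_u) auto
  finally have T4: "\<bar>2 * r * ((c * S * sn - y0) * (c * S * cs) - (c * sh0 * sn) * (c * sh0 * cs))\<bar> \<le> (4 * kx * Bx) * u^2" .
  have mt: "\<bar>m\<bar> * t \<le> u^2" unfolding u_def by (rule U(6))
  have l5: "\<bar>c * (C - ch0) * sn\<bar> \<le> c * k1 * \<bar>m\<bar>" by (rule lin_diff(3)[OF hC sn1 c0 bx t0 k1])
  have l6: "\<bar>c * (S - sh0) * cs\<bar> \<le> c * k1 * \<bar>m\<bar>" by (rule lin_diff(3)[OF hS cs1 c0 by0 t0 k1])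
  have "\<bar>2 * a0 * (c * (C - ch0) * sn) * x0\<bar> \<le> 2 * a0 * (c * k1 * \<bar>m\<bar>) * t" by (rule abs_mul3_le[OF _ l5 bx]) (use a0 in simp)
  also have "\<dots> = (2 * a0 * c * k1) * (\<bar>m\<bar> * t)" by simp
  also have "\<dots> \<le> (2 * a0 * c * k1) * u^2" using a0 c0 k1 mt by (intro scale_u) auto
  finally have T5: "\<bar>2 * a0 * (c * (C - ch0) * sn) * x0\<bar> \<le> (2 * a0 * c * k1) * u^2" .
  have "\<bar>- 2 * g0 * (c * (S - sh0) * cs) * y0\<bar> \<le> 2 * g0 * (c * k1 * \<bar>m\<bar>) * t" by (rule abs_mul3_le[OF _ l6 by0]) (use g0 in simp)
  also have "\<dots> = (2 * g0 * c * k1) * (\<bar>m\<bar> * t)" by simp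
  also have "\<dots> \<le> (2 * g0 * c * k1) * u^2" using g0 c0 k1 mt by (intro scale_u) auto
  finally have T6: "\<bar>- 2 * g0 * (c * (S - sh0) * cs) * y0\<bar> \<le> (2 * g0 * c * k1) * u^2" .
  have "((k1^2 + 2 * ch0 * k2) * Wd) * u^2 + (4 * kx * Bx) * u^2 + (8 * kx * Bx) * u^2 + (4 * kx * Bx) * u^2
     + (2 * a0 * c * k1) * u^2 + (2 * g0 * c * k1) * u^2
    = ((k1^2 + 2 * ch0 * k2) * Wd + 16 * (c * k1 + 1) * Bx + 2 * (a0 + g0) * c * k1) * (\<bar>m\<bar> + t)^2"
    unfolding u_def kx_def by (simp add: algebra_simps)
  thus ?thesis using abs_sum6[OF T1 T2 T3 T4 T5 T6] by simp
qed

lemma Rm_gen: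
  fixes C S ch0 sh0 m t k1 Cm w0 Wm Emv Kb :: real
  assumes hC: "\<bar>C - ch0\<bar> \<le> k1 * \<bar>m\<bar>" and hS: "\<bar>S - sh0\<bar> \<le> k1 * \<bar>m\<bar>" and hSb: "\<bar>S\<bar> \<le> Cm"
    and ch: "0 \<le> ch0" and k1: "0 \<le> k1" and hw: "\<bar>w0\<bar> \<le> Wm" and hE: "\<bar>Emv\<bar> \<le> Kb * t"
    and t0: "0 \<le> t" and Kb: "0 \<le> Kb"
  shows "\<bar>2 * (C * S - ch0 * sh0) * w0 + Emv\<bar> \<le> (2 * k1 * (Cm + ch0) * Wm + Kb) * (\<bar>m\<bar> + t)"
proof -
  have Wm0: "0 \<le> Wm" using hw by linarith
  have eq: "C * S - ch0 * sh0 = (C - ch0) * S + ch0 * (S - sh0)" by (simp add: algebra_simps)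
  have "\<bar>(C - ch0) * S\<bar> \<le> (k1 * \<bar>m\<bar>) * Cm" by (rule abs_mul_le[OF hC hSb])
  moreover have "\<bar>ch0 * (S - sh0)\<bar> \<le> ch0 * (k1 * \<bar>m\<bar>)" by (rule abs_mul_le[OF _ hS]) (use ch in simp)
  ultimately have "\<bar>C * S - ch0 * sh0\<bar> \<le> (k1 * \<bar>m\<bar>) * Cm + ch0 * (k1 * \<bar>m\<bar>)" unfolding eq by (rule abs_sum2)
  hence "\<bar>C * S - ch0 * sh0\<bar> \<le> (k1 * (Cm + ch0)) * \<bar>m\<bar>" by (simp add: algebra_simps)
  hence "\<bar>2 * (C * S - ch0 * sh0) * w0\<bar> \<le> (2 * ((k1 * (Cm + ch0)) * \<bar>m\<bar>)) * Wm"
    by (intro abs_mul_le[OF _ hw]) simp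
  also have "\<dots> = (2 * k1 * (Cm + ch0) * Wm) * \<bar>m\<bar>" by simp
  also have "\<dots> \<le> (2 * k1 * (Cm + ch0) * Wm) * (\<bar>m\<bar> + t)"
  proof (rule scale_u)
    have "0 \<le> Cm" using hSb by linarith
    thus "0 \<le> 2 * k1 * (Cm + ch0) * Wm" using k1 ch Wm0 by simp
  qed (use t0 in simp)
  finally have a: "\<bar>2 * (C * S - ch0 * sh0) * w0\<bar> \<le> (2 * k1 * (Cm + ch0) * Wm) * (\<bar>m\<bar> + t)" .
  have b: "Kb * t \<le> Kb * (\<bar>m\<bar> + t)" using Kb by (intro scale_u) auto
  have "\<bar>2 * (C * S - ch0 * sh0) * w0 + Emv\<bar> \<le> (2 * k1 * (Cm + ch0) * Wm) * (\<bar>m\<bar> + t) + Kb * t"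
    by (rule abs_sum2[OF a hE])
  thus ?thesis using b by (simp add: algebra_simps)
qed

lemma Gp_gen:
  fixes C ch0 m t k1 Cm wd0 Wd Epv Kb :: real
  assumes hC: "\<bar>C - ch0\<bar> \<le> k1 * \<bar>m\<bar>" and hCb: "\<bar>C + ch0\<bar> \<le> Cm + ch0"
    and k1: "0 \<le> k1" and hw: "\<bar>wd0\<bar> \<le> Wd" and hE: "\<bar>Epv\<bar> \<le> Kb * t" and t0: "0 \<le> t" and Kb: "0 \<le> Kb"
  shows "\<bar>(C^2 - ch0^2) * wd0 + Epv\<bar> \<le> (k1 * (Cm + ch0) * Wd + Kb) * (\<bar>m\<bar> + t)"
proof -
  have Wd0: "0 \<le> Wd" using hw by linarith
  have cc: "0 \<le> Cm + ch0" using hCb by linarith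
  have eq: "C^2 - ch0^2 = (C - ch0) * (C + ch0)" by (simp add: algebra_simps power2_eq_square)
  have "\<bar>C^2 - ch0^2\<bar> \<le> (k1 * \<bar>m\<bar>) * (Cm + ch0)" unfolding eq by (rule abs_mul_le[OF hC hCb])
  hence "\<bar>(C^2 - ch0^2) * wd0\<bar> \<le> ((k1 * \<bar>m\<bar>) * (Cm + ch0)) * Wd" by (rule abs_mul_le[OF _ hw])
  also have "\<dots> = (k1 * (Cm + ch0) * Wd) * \<bar>m\<bar>" by simp
  also have "\<dots> \<le> (k1 * (Cm + ch0) * Wd) * (\<bar>m\<bar> + t)" using k1 cc Wd0 t0 by (intro scale_u) auto
  finally have a: "\<bar>(C^2 - ch0^2) * wd0\<bar> \<le> (k1 * (Cm + ch0) * Wd) * (\<bar>m\<bar> + t)" .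
  have b: "Kb * t \<le> Kb * (\<bar>m\<bar> + t)" using Kb by (intro scale_u) auto
  have "\<bar>(C^2 - ch0^2) * wd0 + Epv\<bar> \<le> (k1 * (Cm + ch0) * Wd) * (\<bar>m\<bar> + t) + Kb * t" by (rule abs_sum2[OF a hE])
  thus ?thesis using b by (simp add: algebra_simps)
qed

lemma elliptic_coords:
  fixes x y c :: real assumes c: "0 < c"
  shows "\<exists>mu ph. 0 \<le> mu \<and> x = c * cosh mu * cos ph \<and> y = c * sinh mu * sin ph"
proof -
  define z where "z = Complex (x/c) (y/c)"
  define wv where "wv = Arccos z"
  have cz: "cos wv = z" unfolding wv_def by simp
  have re: "x/c = cos (Re wv) * cosh (Im wv)"
    using arg_cong[OF cz, of Re] by (simp add: Re_cos z_def cosh_eq)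
  have im: "y/c = - sin (Re wv) * sinh (Im wv)"
    using arg_cong[OF cz, of Im] by (simp add: Im_cos z_def sinh_eq algebra_simps)
  have re': "x = c * cosh (Im wv) * cos (Re wv)" using re c by (simp add: field_simps)
  have im': "y = - c * sinh (Im wv) * sin (Re wv)" using im c by (simp add: field_simps)
  show ?thesis
  proof (cases "0 \<le> Im wv")
    case True
    show ?thesis
      by (rule exI[of _ "Im wv"], rule exI[of _ "- Re wv"]) (use True re' im' in simp)
  next
    case False
    show ?thesis
      by (rule exI[of _ "- Im wv"], rule exI[of _ "Re wv"]) (use False re' im' in simp)
  qed
qed

lemma rot_alg:
  fixes a b g u v cs sn :: real
  assumes "(g - a) * (2 * sn * cs) + 2 * b * (cs^2 - sn^2) = 0"
  shows "a * (u * cs - v * sn)^2 + 2 * b * (u * cs - v * sn) * (u * sn + v * cs) + g * (u * sn + v * cs)^2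
    = (a * cs^2 + 2 * b * cs * sn + g * sn^2) * u^2 + (a * sn^2 - 2 * b * sn * cs + g * cs^2) * v^2"
  using assms by algebra

lemma rot_prod:
  fixes a b g cs sn :: real
  assumes "(g - a) * (2 * sn * cs) + 2 * b * (cs^2 - sn^2) = 0" "cs^2 + sn^2 = 1"
  shows "(a * cs^2 + 2 * b * cs * sn + g * sn^2) * (a * sn^2 - 2 * b * sn * cs + g * cs^2) = a * g - b^2"
  using assms by algebra

lemma rot_sum:
  fixes a b g cs sn :: real
  assumes "cs^2 + sn^2 = 1"
  shows "(a * cs^2 + 2 * b * cs * sn + g * sn^2) + (a * sn^2 - 2 * b * sn * cs + g * cs^2) = a + g"
  using assms by algebra

lemma rot_inv:
  fixes u v cs sn d1 d2 :: real
  assumes "cs^2 + sn^2 = 1"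
  shows "(d1 * cs + d2 * sn) * cs - (- d1 * sn + d2 * cs) * sn = d1"
    and "(d1 * cs + d2 * sn) * sn + (- d1 * sn + d2 * cs) * cs = d2"
  using assms by algebra+

lemma conic_ellipse:
  fixes a b g x0 y0 :: real
  assumes a: "0 < a" and g: "0 < g" and bg: "b^2 < a * g"
  shows "is_ellipse {(x, y). a * (x - x0)^2 + 2 * b * (x - x0) * (y - y0) + g * (y - y0)^2 = 1}"
proof -
  obtain th where th: "(g - a) * sin (2 * th) + 2 * b * cos (2 * th) = 0"
  proof (cases "(a - g)^2 + 4 * b^2 = 0")
    case True
    have "(a - g)^2 = 0 \<and> 4 * b^2 = 0" using True by (subst add_nonneg_eq_0_iff[symmetric]) auto
    hence "a = g" "b = 0" by auto
    thus ?thesis using that[of 0] by simp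
  next
    case False
    define rho where "rho = sqrt ((a - g)^2 + 4 * b^2)"
    have nn: "0 \<le> (a - g)^2 + 4 * b^2" by simp
    have pos: "0 < (a - g)^2 + 4 * b^2" using False nn by (auto simp: less_le)
    have rho: "0 < rho" using pos unfolding rho_def by simp
    have rho2: "rho^2 = (a - g)^2 + 4 * b^2" unfolding rho_def using nn by simp
    have "((a - g) / rho)^2 + (2 * b / rho)^2 = 1"
      using rho rho2 pos by (simp add: power_divide add_divide_distrib[symmetric])
    then obtain psi where ps: "(a - g) / rho = cos psi" "2 * b / rho = sin psi"
      by (rule sincos_total_2pi) auto
    have "(g - a) * sin psi + 2 * b * cos psi = 0"
      unfolding ps[symmetric] using rho by (simp add: field_simps)
    thus ?thesis using that[of "psi / 2"] by simp
  qed
  define cs where "cs = cos th"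
  define sn where "sn = sin th"
  have cs2: "cs^2 + sn^2 = 1" unfolding cs_def sn_def by simp
  have cross: "(g - a) * (2 * sn * cs) + 2 * b * (cs^2 - sn^2) = 0"
    using th unfolding cs_def sn_def sin_double cos_double by (simp add: algebra_simps)
  define l1 where "l1 = a * cs^2 + 2 * b * cs * sn + g * sn^2"
  define l2 where "l2 = a * sn^2 - 2 * b * sn * cs + g * cs^2"
  have prod: "l1 * l2 = a * g - b^2" unfolding l1_def l2_def by (rule rot_prod[OF cross cs2])
  have sum: "l1 + l2 = a + g" unfolding l1_def l2_def by (rule rot_sum[OF cs2])
  have pp: "0 < l1 * l2" using prod bg by simp
  have l1: "0 < l1" and l2: "0 < l2"
  proof -
    have "(0 < l1 \<and> 0 < l2) \<or> (l1 < 0 \<and> l2 < 0)" using pp by (simp add: zero_less_mult_iff)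
    thus "0 < l1" "0 < l2" using sum a g by auto
  qed
  define A where "A = 1 / sqrt l1"
  define B where "B = 1 / sqrt l2"
  have A: "0 < A" "l1 * A^2 = 1" using l1 unfolding A_def by (auto simp: power_divide)
  have B: "0 < B" "l2 * B^2 = 1" using l2 unfolding B_def by (auto simp: power_divide)
  have key: "\<And>u v. a * (u * cs - v * sn)^2 + 2 * b * (u * cs - v * sn) * (u * sn + v * cs) + g * (u * sn + v * cs)^2
      = l1 * u^2 + l2 * v^2" unfolding l1_def l2_def by (rule rot_alg[OF cross])
  let ?S = "{(x, y). a * (x - x0)^2 + 2 * b * (x - x0) * (y - y0) + g * (y - y0)^2 = 1}"
  let ?f = "\<lambda>t. (x0 + A * cos t * cos th - B * sin t * sin th, y0 + A * cos t * sin th + B * sin t * cos th)"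
  have "?S = range ?f"
  proof (intro set_eqI iffI)
    fix z assume "z \<in> ?S"
    then obtain x y where z: "z = (x, y)" and Q: "a * (x - x0)^2 + 2 * b * (x - x0) * (y - y0) + g * (y - y0)^2 = 1" by auto
    define u where "u = (x - x0) * cs + (y - y0) * sn"
    define v where "v = - (x - x0) * sn + (y - y0) * cs"
    have xu: "u * cs - v * sn = x - x0" unfolding u_def v_def by (rule rot_inv(1)[OF cs2])
    have yu: "u * sn + v * cs = y - y0" unfolding u_def v_def by (rule rot_inv(2)[OF cs2])
    have "l1 * u^2 + l2 * v^2 = 1" using key[of u v] Q unfolding xu yu by simp
    moreover have "l1 * u^2 = (u / A)^2" "l2 * v^2 = (v / B)^2" using A B by (auto simp: power_divide field_simps)
    ultimately have "(u / A)^2 + (v / B)^2 = 1" by simp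
    then obtain tt where tt: "u / A = cos tt" "v / B = sin tt" by (rule sincos_total_2pi) auto
    have "u = A * cos tt" "v = B * sin tt" using tt A B by (auto simp: field_simps)
    hence "z = ?f tt" using z xu yu unfolding cs_def sn_def by (auto simp: algebra_simps)
    thus "z \<in> range ?f" by blast
  next
    fix z assume "z \<in> range ?f"
    then obtain tt where z: "z = ?f tt" by blast
    have "a * ((A * cos tt) * cs - (B * sin tt) * sn)^2 + 2 * b * ((A * cos tt) * cs - (B * sin tt) * sn) * ((A * cos tt) * sn + (B * sin tt) * cs)
        + g * ((A * cos tt) * sn + (B * sin tt) * cs)^2 = l1 * (A * cos tt)^2 + l2 * (B * sin tt)^2" by (rule key)
    also have "\<dots> = (l1 * A^2) * (cos tt)^2 + (l2 * B^2) * (sin tt)^2" by (simp add: power_mult_distrib)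
    also have "\<dots> = 1" using A B by simp
    finally show "z \<in> ?S" using z unfolding cs_def sn_def by (simp add: algebra_simps)
  qed
  thus ?thesis unfolding is_ellipse_def using A(1) B(1) by blast
qed

context ell2 begin

lemma mu0_m0: "mu0 e0 = m0" by (simp add: m0_def)

lemma curve_eq: "perturbed_curve e0 c nu =
    {(x, y). (al0 + p) * (x - x0)^2 + 2 * q * (x - x0) * (y - y0) + (ga0 + r) * (y - y0)^2 = 1}"
proof (intro set_eqI iffI)
  fix z assume "z \<in> perturbed_curve e0 c nu"
  then obtain ph where z: "z = (c * cosh (m0 + nu ph) * cos ph, c * sinh (m0 + nu ph) * sin ph)"
    unfolding perturbed_curve_def mu0_m0 by blast
  have "G ph (nu ph) = 0" by (rule nu_root)
  thus "z \<in> {(x, y). (al0 + p) * (x - x0)^2 + 2 * q * (x - x0) * (y - y0) + (ga0 + r) * (y - y0)^2 = 1}"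
    unfolding z G_def X_def Y_def by simp
next
  fix z assume "z \<in> {(x, y). (al0 + p) * (x - x0)^2 + 2 * q * (x - x0) * (y - y0) + (ga0 + r) * (y - y0)^2 = 1}"
  then obtain x y where z: "z = (x, y)" and Q: "(al0 + p) * (x - x0)^2 + 2 * q * (x - x0) * (y - y0) + (ga0 + r) * (y - y0)^2 = 1" by auto
  obtain mu ph where mu: "0 \<le> mu" "x = c * cosh mu * cos ph" "y = c * sinh mu * sin ph"
    using elliptic_coords[OF cpos] by blast
  have mm: "m0 + (mu - m0) = mu" by simp
  have "G ph (mu - m0) = 0" unfolding G_def X_def Y_def mm using Q mu by simp
  hence "mu - m0 = nu ph" using mu by (intro nu_global) auto
  hence "mu = m0 + nu ph" by simp
  thus "z \<in> perturbed_curve e0 c nu" unfolding perturbed_curve_def mu0_m0 z using mu by auto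
qed

lemma is_ell: "is_ellipse (perturbed_curve e0 c nu)"
proof -
  have p1: "- t \<le> p" "- t \<le> r" using bp br by auto
  have ta: "t \<le> al0 / 4" "t \<le> ga0 / 4" using tsm eps0_al eps0_ga by linarith+
  have a: "0 < al0 + p" using p1 ta al0_pos by linarith
  have g: "0 < ga0 + r" using p1 ta ga0_pos by linarith
  have "q^2 \<le> t^2" using sq_le_of_abs[OF bq] by simp
  also have "t^2 \<le> (al0/4) * (ga0/4)" unfolding power2_eq_square using ta t_nonneg by (intro mult_mono) auto
  also have "\<dots> < (3 * al0 / 4) * (3 * ga0 / 4)" using al0_pos ga0_pos by (simp add: field_simps)
  also have "\<dots> \<le> (al0 + p) * (ga0 + r)" using p1 ta al0_pos ga0_pos by (intro mult_mono) auto
  finally have "q^2 < (al0 + p) * (ga0 + r)" .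
  thus ?thesis unfolding curve_eq by (rule conic_ellipse[OF a g])
qed

end

context ell begin

definition k3 :: real where "k3 = k1^2 + 2 * ch0 * k2"
definition Wm :: real where "Wm = 1 / ch0^2 + 1 / sh0^2"
definition KR :: real where "KR = k3 * Wm + 8 * (c * k1 + 1) * Bx + (al0 + ga0) * (2 * c * k1 + 1)"
definition KRp :: real where "KRp = k3 * Wd + 16 * (c * k1 + 1) * Bx + 2 * (al0 + ga0) * c * k1"
definition KRm :: real where "KRm = 2 * k1 * (Cm + ch0) * Wm + Kb"
definition KGp :: real where "KGp = k1 * (Cm + ch0) * Wd + Kb"
definition gmin :: real where "gmin = 2 * ch0 * sh0 * e0^2"
definition Gd :: real where "Gd = 2 * ch0 * sh0 * Wd"
definition KD0 :: real where "KD0 = KR * (K0 + 1)^2 / gmin"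
definition KD1 :: real where "KD1 = ((KRp + KRm * (KGp / gm)) / gmin + KR * Gd / gmin^2) * (K0 + 1)^2"

lemma k1_nonneg: "0 \<le> k1" using ch0_pos k2_pos by (simp add: k1_def)
lemma k2_nonneg: "0 \<le> k2" using k2_pos by simp
lemma ch0_nonneg: "0 \<le> ch0" using ch0_pos by simp
lemma w_abs: "\<bar>w ph\<bar> \<le> Wm"
proof -
  have "(cos ph)^2 / ch0^2 \<le> 1 / ch0^2" using ch0_pos by (intro divide_right_mono) (auto simp: abs_square_le_1)
  moreover have "(sin ph)^2 / sh0^2 \<le> 1 / sh0^2" using sh0_pos by (intro divide_right_mono) (auto simp: abs_square_le_1)
  moreover have "0 < w ph" by (rule w_pos)
  ultimately show ?thesis unfolding Wm_def w_def by simp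
qed
lemma gmin_pos: "0 < gmin" using ch0_pos sh0_pos e0pos by (simp add: gmin_def)
lemma Wd_nonneg: "0 \<le> Wd" using sh0_pos by (simp add: Wd_def)
lemma K0_nonneg: "0 \<le> K0" using Kg_pos ch0_pos gm_pos by (simp add: K0_def)
lemma KR_nonneg: "0 \<le> KR"
  unfolding KR_def k3_def Wm_def Bx_def using k1_nonneg k2_nonneg ch0_pos sh0_pos cpos Cm_ge1 al0_pos ga0_pos
  by (intro add_nonneg_nonneg mult_nonneg_nonneg) auto
lemma KRp_nonneg: "0 \<le> KRp"
  unfolding KRp_def k3_def Wd_def Bx_def using k1_nonneg k2_nonneg ch0_pos sh0_pos cpos Cm_ge1 al0_pos ga0_pos
  by (intro add_nonneg_nonneg mult_nonneg_nonneg) auto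
lemma KRm_nonneg: "0 \<le> KRm"
  unfolding KRm_def Wm_def using k1_nonneg ch0_pos sh0_pos Cm_ge1 Kb_pos
  by (intro add_nonneg_nonneg mult_nonneg_nonneg) auto
lemma KGp_nonneg: "0 \<le> KGp"
  unfolding KGp_def Wd_def using k1_nonneg ch0_pos sh0_pos Cm_ge1 Kb_pos
  by (intro add_nonneg_nonneg mult_nonneg_nonneg) auto
lemma Gd_nonneg: "0 \<le> Gd" unfolding Gd_def Wd_def using ch0_pos sh0_pos by simp
lemma sh0_le_Cm: "sh0 \<le> Cm" using sh0_lt_ch0 ch0_le_Cm by linarith

end

context ell2 begin

definition g :: "real \<Rightarrow> real" where "g ph = 2 * ch0 * sh0 * w ph"
definition gd :: "real \<Rightarrow> real" where "gd ph = 2 * ch0 * sh0 * wd ph"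
definition L :: "real \<Rightarrow> real" where
  "L ph = p * (c * ch0 * cos ph)^2 + 2 * q * (c * ch0 * cos ph) * (c * sh0 * sin ph) + r * (c * sh0 * sin ph)^2
     - 2 * al0 * c * ch0 * cos ph * x0 - 2 * ga0 * c * sh0 * sin ph * y0"
definition Ld :: "real \<Rightarrow> real" where
  "Ld ph = 2 * p * (c * ch0 * cos ph) * (- (c * ch0 * sin ph))
     + 2 * q * ((- (c * ch0 * sin ph)) * (c * sh0 * sin ph) + (c * ch0 * cos ph) * (c * sh0 * cos ph))
     + 2 * r * (c * sh0 * sin ph) * (c * sh0 * cos ph) + 2 * al0 * c * ch0 * sin ph * x0 - 2 * ga0 * c * sh0 * cos ph * y0"
definition R :: "real \<Rightarrow> real \<Rightarrow> real" where "R ph m = G ph m - g ph * m - L ph"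
definition Rm :: "real \<Rightarrow> real \<Rightarrow> real" where "Rm ph m = Gm ph m - g ph"
definition Rp :: "real \<Rightarrow> real \<Rightarrow> real" where "Rp ph m = Gp ph m - gd ph * m - Ld ph"
definition mu1L :: "real \<Rightarrow> real" where "mu1L ph = - L ph / g ph"

lemma g_ge: "gmin \<le> g ph"
  unfolding g_def gmin_def using w_ge[of ph] ch0_pos sh0_pos by (intro mult_left_mono) auto
lemma g_pos: "0 < g ph" using g_ge gmin_pos by (rule order.strict_trans2[rotated])
lemma gd_abs: "\<bar>gd ph\<bar> \<le> Gd"
  unfolding gd_def Gd_def using wd_bound[of ph] ch0_pos sh0_pos by (simp add: abs_mult)

lemma g_deriv: "(g has_real_derivative gd ph) (at ph)"
  unfolding g_def w_def gd_def wd_def using ch0_pos sh0_pos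
  by (auto intro!: derivative_eq_intros simp: field_simps power2_eq_square)

lemma L_deriv: "(L has_real_derivative Ld ph) (at ph)"
  unfolding L_def Ld_def
  by (auto intro!: derivative_eq_intros simp: algebra_simps power2_eq_square)

lemma R_eq: "R ph m = ((cosh (m0+m))^2 - ch0^2 - 2 * ch0 * sh0 * m) * w ph
     + p * ((c * cosh (m0+m) * cos ph - x0)^2 - (c * ch0 * cos ph)^2)
     + 2 * q * ((c * cosh (m0+m) * cos ph - x0) * (c * sinh (m0+m) * sin ph - y0) - (c * ch0 * cos ph) * (c * sh0 * sin ph))
     + r * ((c * sinh (m0+m) * sin ph - y0)^2 - (c * sh0 * sin ph)^2)
     + al0 * (-2 * c * (cosh (m0+m) - ch0) * cos ph * x0 + x0^2)
     + ga0 * (-2 * c * (sinh (m0+m) - sh0) * sin ph * y0 + y0^2)"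
  unfolding R_def G_split E_def g_def L_def X_def Y_def by (simp add: algebra_simps)

lemma Rp_eq: "Rp ph m = ((cosh (m0+m))^2 - ch0^2 - 2 * ch0 * sh0 * m) * wd ph
     + 2 * p * ((c * cosh (m0+m) * cos ph - x0) * (- (c * cosh (m0+m) * sin ph)) - (c * ch0 * cos ph) * (- (c * ch0 * sin ph)))
     + 2 * q * (((- (c * cosh (m0+m) * sin ph)) * (c * sinh (m0+m) * sin ph - y0) - (- (c * ch0 * sin ph)) * (c * sh0 * sin ph))
                + ((c * cosh (m0+m) * cos ph - x0) * (c * sinh (m0+m) * cos ph) - (c * ch0 * cos ph) * (c * sh0 * cos ph)))
     + 2 * r * ((c * sinh (m0+m) * sin ph - y0) * (c * sinh (m0+m) * cos ph) - (c * sh0 * sin ph) * (c * sh0 * cos ph))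
     + 2 * al0 * (c * (cosh (m0+m) - ch0) * sin ph) * x0 + (- 2 * ga0 * (c * (sinh (m0+m) - sh0) * cos ph) * y0)"
  unfolding Rp_def Gp_split Ep_def gd_def Ld_def X_def Y_def by (simp add: algebra_simps)

lemma Rm_eq: "Rm ph m = 2 * (cosh (m0+m) * sinh (m0+m) - ch0 * sh0) * w ph + Em ph m"
  unfolding Rm_def Gm_split g_def by (simp add: algebra_simps)

lemma X0_b: "\<bar>c * ch0 * cos ph\<bar> \<le> Bx" unfolding Bx_def
  by (rule lin_bound(2)[OF bx t_le1 _ abs_cos_le_one cpos]) (use ch0_le_Cm ch0_pos in simp)
lemma Y0_b: "\<bar>c * sh0 * sin ph\<bar> \<le> Bx" unfolding Bx_def
  by (rule lin_bound(2)[OF bx t_le1 _ abs_sin_le_one cpos]) (use sh0_le_Cm sh0_pos in simp)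
lemma X0p_b: "\<bar>- (c * ch0 * sin ph)\<bar> \<le> Bx" unfolding Bx_def abs_minus_cancel
  by (rule lin_bound(2)[OF bx t_le1 _ abs_sin_le_one cpos]) (use ch0_le_Cm ch0_pos in simp)
lemma Y0p_b: "\<bar>c * sh0 * cos ph\<bar> \<le> Bx" unfolding Bx_def
  by (rule lin_bound(2)[OF bx t_le1 _ abs_cos_le_one cpos]) (use sh0_le_Cm sh0_pos in simp)

lemma R_bnd: assumes "\<bar>m\<bar> \<le> 1" shows "\<bar>R ph m\<bar> \<le> KR * (\<bar>m\<bar> + t)^2"
  unfolding R_eq KR_def k3_def
  by (rule R_gen[OF bp bq br bx byy abs_cos_le_one abs_sin_le_one cpos al0_nonneg ga0_nonneg
        C_first[OF assms] S_first[OF assms] C_second[OF assms] ch0_nonneg k1_nonneg k2_nonneg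
        X_band[OF assms, unfolded X_def] Y_band[OF assms, unfolded Y_def] X0_b Y0_b w_abs])

lemma Rp_bnd: assumes "\<bar>m\<bar> \<le> 1" shows "\<bar>Rp ph m\<bar> \<le> KRp * (\<bar>m\<bar> + t)^2"
proof -
  have xp: "\<bar>- (c * cosh (m0+m) * sin ph)\<bar> \<le> Bx" using CS_band[OF assms] by simp
  show ?thesis unfolding Rp_eq KRp_def k3_def
    by (rule Rp_gen[OF bp bq br bx byy abs_cos_le_one abs_sin_le_one cpos al0_nonneg ga0_nonneg
        C_first[OF assms] S_first[OF assms] C_second[OF assms] ch0_nonneg k1_nonneg k2_nonneg
        X_band[OF assms, unfolded X_def] Y_band[OF assms, unfolded Y_def] X0_b Y0_b
        xp SC_band[OF assms] X0p_b Y0p_b wd_bound])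
qed

lemma Rm_bnd: assumes "\<bar>m\<bar> \<le> 1" shows "\<bar>Rm ph m\<bar> \<le> KRm * (\<bar>m\<bar> + t)"
  unfolding Rm_eq KRm_def
  by (rule Rm_gen[OF C_first[OF assms] S_first[OF assms] band_S[OF assms] ch0_nonneg k1_nonneg w_abs
        Em_bnd[OF assms] t_nonneg]) (use Kb_pos in simp)

lemma Gp_small: assumes "\<bar>m\<bar> \<le> 1" shows "\<bar>Gp ph m\<bar> \<le> KGp * (\<bar>m\<bar> + t)"
proof -
  have hCb: "\<bar>cosh (m0+m) + ch0\<bar> \<le> Cm + ch0" using band_C[OF assms] ch0_pos by simp
  show ?thesis unfolding Gp_split KGp_def
    by (rule Gp_gen[OF C_first[OF assms] hCb k1_nonneg wd_bound Ep_bnd[OF assms] t_nonneg]) (use Kb_pos in simp)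
qed

lemma u_bound: "\<bar>nu ph\<bar> + t \<le> (K0 + 1) * t"
  using nu_small[of ph] by (simp add: algebra_simps)

lemma u2_bound: "(\<bar>nu ph\<bar> + t)^2 \<le> (K0 + 1)^2 * t^2"
proof -
  have "(\<bar>nu ph\<bar> + t)^2 \<le> ((K0 + 1) * t)^2" using u_bound[of ph] t_nonneg by (intro power_mono) auto
  thus ?thesis by (simp add: power_mult_distrib)
qed

lemma D_eq: "mu1L ph - nu ph = R ph (nu ph) / g ph"
  using nu_root[of ph] g_pos[of ph] unfolding mu1L_def R_def by (simp add: field_simps)

lemma D_bnd: "\<bar>mu1L ph - nu ph\<bar> \<le> KD0 * t^2"
proof -
  have a: "\<bar>R ph (nu ph)\<bar> \<le> KR * (K0 + 1)^2 * t^2"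
  proof -
    have "\<bar>R ph (nu ph)\<bar> \<le> KR * (\<bar>nu ph\<bar> + t)^2" by (rule R_bnd[OF nu_band1])
    also have "\<dots> \<le> KR * ((K0 + 1)^2 * t^2)"
    proof (rule mult_left_mono[OF u2_bound])
      show "0 \<le> KR" by (rule KR_nonneg)
    qed
    finally show ?thesis by simp
  qed
  have "\<bar>R ph (nu ph) / g ph\<bar> = \<bar>R ph (nu ph)\<bar> / g ph" using g_pos[of ph] by simp
  also have "\<dots> \<le> \<bar>R ph (nu ph)\<bar> / gmin" using g_ge[of ph] gmin_pos by (intro divide_left_mono) auto
  also have "\<dots> \<le> KR * (K0 + 1)^2 * t^2 / gmin" using a gmin_pos by (intro divide_right_mono) auto
  also have "\<dots> = KD0 * t^2" by (simp add: KD0_def)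
  finally show ?thesis unfolding D_eq .
qed

lemma div_bound: "\<bar>V\<bar> \<le> B \<Longrightarrow> 0 < gmn \<Longrightarrow> gmn \<le> gg \<Longrightarrow> \<bar>V / gg\<bar> \<le> B / (gmn::real)"
proof -
  assume h: "\<bar>V\<bar> \<le> B" "0 < gmn" "gmn \<le> gg"
  have "\<bar>V / gg\<bar> = \<bar>V\<bar> / gg" using h by simp
  also have "\<dots> \<le> \<bar>V\<bar> / gmn" using h by (intro divide_left_mono) auto
  also have "\<dots> \<le> B / gmn" using h by (intro divide_right_mono) auto
  finally show ?thesis .
qed

definition N :: "real \<Rightarrow> real" where "N ph = - (g ph * nu ph) - L ph"

lemma N_deriv: "(N has_real_derivative (- (gd ph * nu ph + g ph * nud ph) - Ld ph)) (at ph)"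
  unfolding N_def by (auto intro!: derivative_eq_intros g_deriv nu_deriv L_deriv)

lemma N_eq: "N ph = R ph (nu ph)" using nu_root[of ph] unfolding N_def R_def by simp

lemma Nd_eq: "- (gd ph * nu ph + g ph * nud ph) - Ld ph = Rp ph (nu ph) + Rm ph (nu ph) * nud ph"
proof -
  have h: "Gp ph (nu ph) + Gm ph (nu ph) * nud ph = 0" using Gm_nu_pos[of ph] unfolding nud_def by simp
  have "Rp ph (nu ph) + Rm ph (nu ph) * nud ph
     = (Gp ph (nu ph) + Gm ph (nu ph) * nud ph) - gd ph * nu ph - Ld ph - g ph * nud ph"
    by (simp add: Rp_def Rm_def algebra_simps)
  thus ?thesis using h by linarith
qed

definition Dd :: "real \<Rightarrow> real" where
  "Dd ph = ((Rp ph (nu ph) + Rm ph (nu ph) * nud ph) * g ph - R ph (nu ph) * gd ph) / (g ph * g ph)"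

lemma D_deriv: "((\<lambda>ph. mu1L ph - nu ph) has_real_derivative Dd ph) (at ph)"
proof -
  have fe: "(\<lambda>ph. mu1L ph - nu ph) = (\<lambda>ph. N ph / g ph)" by (rule ext) (simp add: D_eq N_eq)
  have "((\<lambda>ph. N ph / g ph) has_real_derivative
      ((- (gd ph * nu ph + g ph * nud ph) - Ld ph) * g ph - N ph * gd ph) / (g ph * g ph)) (at ph)"
    by (rule DERIV_divide[OF N_deriv g_deriv]) (use g_pos[of ph] in simp)
  thus ?thesis unfolding fe Nd_eq N_eq Dd_def .
qed

lemma nud_bnd: "\<bar>nud ph\<bar> \<le> KGp * (\<bar>nu ph\<bar> + t) / gm"
proof -
  have h1: "\<bar>Gp ph (nu ph)\<bar> \<le> KGp * (\<bar>nu ph\<bar> + t)" by (rule Gp_small[OF nu_band1])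
  have h2: "gm \<le> Gm ph (nu ph)" by (rule Gm_band[OF nu_band])
  have "\<bar>Gp ph (nu ph) / Gm ph (nu ph)\<bar> \<le> KGp * (\<bar>nu ph\<bar> + t) / gm" by (rule div_bound[OF h1 gm_pos h2])
  thus ?thesis by (simp add: nud_def)
qed

lemma Dd_bnd: "\<bar>Dd ph\<bar> \<le> KD1 * t^2"
proof -
  define n where "n = nu ph"
  define u where "u = \<bar>n\<bar> + t"
  have u0: "0 \<le> u" unfolding u_def using t_nonneg by simp
  have a1: "\<bar>Rp ph n\<bar> \<le> KRp * u^2" unfolding u_def n_def by (rule Rp_bnd[OF nu_band1])
  have a2: "\<bar>Rm ph n\<bar> \<le> KRm * u" unfolding u_def n_def by (rule Rm_bnd[OF nu_band1])
  have a3: "\<bar>nud ph\<bar> \<le> (KGp / gm) * u" using nud_bnd[of ph] unfolding u_def n_def by simp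
  have a4: "\<bar>R ph n\<bar> \<le> KR * u^2" unfolding u_def n_def by (rule R_bnd[OF nu_band1])
  have "\<bar>Rm ph n * nud ph\<bar> \<le> (KRm * u) * ((KGp / gm) * u)" by (rule abs_mul_le[OF a2 a3])
  hence "\<bar>Rp ph n + Rm ph n * nud ph\<bar> \<le> KRp * u^2 + (KRm * u) * ((KGp / gm) * u)"
    using a1 abs_triangle_ineq[of "Rp ph n" "Rm ph n * nud ph"] by linarith
  also have "\<dots> = (KRp + KRm * (KGp / gm)) * u^2" by (simp add: algebra_simps power2_eq_square)
  finally have b1: "\<bar>Rp ph n + Rm ph n * nud ph\<bar> \<le> (KRp + KRm * (KGp / gm)) * u^2" .
  have q1: "\<bar>(Rp ph n + Rm ph n * nud ph) / g ph\<bar> \<le> (KRp + KRm * (KGp / gm)) * u^2 / gmin"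
    by (rule div_bound[OF b1 gmin_pos g_ge])
  have b2: "\<bar>R ph n * gd ph\<bar> \<le> KR * u^2 * Gd" by (rule abs_mul_le[OF a4 gd_abs])
  have gg: "gmin * gmin \<le> g ph * g ph" using g_ge[of ph] gmin_pos by (intro mult_mono) auto
  have q2: "\<bar>R ph n * gd ph / (g ph * g ph)\<bar> \<le> KR * u^2 * Gd / (gmin * gmin)"
    by (rule div_bound[OF b2 _ gg]) (use gmin_pos in simp)
  have eqD: "Dd ph = (Rp ph n + Rm ph n * nud ph) / g ph - R ph n * gd ph / (g ph * g ph)"
    unfolding Dd_def n_def using g_pos[of ph] by (simp add: field_simps)
  have "\<bar>Dd ph\<bar> \<le> (KRp + KRm * (KGp / gm)) * u^2 / gmin + KR * u^2 * Gd / (gmin * gmin)"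
    unfolding eqD using q1 q2 abs_triangle_ineq4[of "(Rp ph n + Rm ph n * nud ph) / g ph" "R ph n * gd ph / (g ph * g ph)"]
    by linarith
  also have "\<dots> = ((KRp + KRm * (KGp / gm)) / gmin + KR * Gd / gmin^2) * u^2"
    by (simp add: field_simps power2_eq_square)
  also have "\<dots> \<le> ((KRp + KRm * (KGp / gm)) / gmin + KR * Gd / gmin^2) * ((K0 + 1)^2 * t^2)"
  proof (rule mult_left_mono)
    show "u^2 \<le> (K0 + 1)^2 * t^2" unfolding u_def n_def by (rule u2_bound)
    show "0 \<le> (KRp + KRm * (KGp / gm)) / gmin + KR * Gd / gmin^2"
      using KRp_nonneg KRm_nonneg KGp_nonneg gm_pos gmin_pos KR_nonneg Gd_nonneg by simp
  qed
  also have "\<dots> = KD1 * t^2" by (simp add: KD1_def)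
  finally show ?thesis .
qed

end

lemma trig_alg:
  fixes s cc a0 a1 b1 a2 b2 :: real
  assumes "s^2 + cc^2 = 1"
  shows "(a0 + a2) * cc^2 + b2 * (2 * s * cc) + (a0 - a2) * s^2 + a1 * cc + b1 * s
       = a0 + a1 * cc + b1 * s + a2 * (cc^2 - s^2) + b2 * (2 * s * cc)"
  using assms by algebra

context ell begin

definition kk :: real where "kk = - 2 * ch0 / sh0"
definition KA :: real where
  "KA = \<bar>kk\<bar> / (c^2 * ch0^2) + 2 / (c^2 * sh0^2) + \<bar>kk\<bar> / (c^2 * sh0^2) + c * ch0^2 / sh0 + c * ch0"

lemma KA_nonneg: "0 \<le> KA"
  unfolding KA_def using cpos ch0_pos sh0_pos by (intro add_nonneg_nonneg) auto

lemma ch0_gt1: "1 < ch0" using e0pos e0lt1 by (simp add: ch0_eq)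

lemma den_pos: "0 < ch0^2 - (cos ph)^2"
proof -
  have "(cos ph)^2 \<le> 1" by (simp add: abs_square_le_1)
  moreover have "1 < ch0^2" using ch0_gt1 by (simp add: one_less_power)
  ultimately show ?thesis by linarith
qed

lemma eh_eq: "e_h e0 ph = ch0^2 / (ch0^2 - (cos ph)^2)"
proof -
  have e2: "e0^2 = 1 / ch0^2" using e0pos by (simp add: ch0_eq power_divide)
  show ?thesis unfolding e_h_def e2 using ch0_pos den_pos[of ph] by (simp add: field_simps)
qed

lemma eh_ge1: "1 \<le> e_h e0 ph"
  unfolding eh_eq using den_pos[of ph] ch0_pos by (simp add: field_simps)

end

context ell2 begin

lemma w_eq: "w ph = (ch0^2 - (cos ph)^2) / (ch0^2 * sh0^2)"
proof -
  have "w ph * (ch0^2 * sh0^2) = ch0^2 - (cos ph)^2"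
    unfolding w_mult using ch0_sh0 by (simp add: sin_squared_eq algebra_simps)
  thus ?thesis using kne by (simp add: field_simps)
qed

lemma g_eh: "g ph * e_h e0 ph = 2 * ch0 / sh0"
  unfolding g_def w_eq eh_eq using ch0_pos sh0_pos den_pos[of ph] by (simp add: field_simps power2_eq_square)

lemma mu1_identity:
  assumes hp: "p = kk * (a0 + a2) / (c^2 * ch0^2)" and hq: "q = - 2 * b2 / (c^2 * sh0^2)"
    and hr: "r = kk * (a0 - a2) / (c^2 * sh0^2)" and hx: "x0 = a1 * c * ch0^2 / sh0" and hy: "y0 = b1 * c * ch0"
  shows "a0 * e_h e0 ph + a1 * e_tau1 e0 ph + b1 * e_tau2 e0 ph + a2 * e_hr e0 ph + b2 * e_r e0 ph = mu1L ph"
proof -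
  define TP where "TP = a0 + a1 * cos ph + b1 * sin ph + a2 * cos (2 * ph) + b2 * sin (2 * ph)"
  have lhs: "a0 * e_h e0 ph + a1 * e_tau1 e0 ph + b1 * e_tau2 e0 ph + a2 * e_hr e0 ph + b2 * e_r e0 ph = TP * e_h e0 ph"
    unfolding TP_def e_tau1_def e_tau2_def e_hr_def e_r_def by (simp add: algebra_simps)
  have cz: "c \<noteq> 0" "ch0 \<noteq> 0" "sh0 \<noteq> 0" using cpos ch0_pos sh0_pos by auto
  have P1: "p * (c * ch0 * cos ph)^2 = kk * (a0 + a2) * (cos ph)^2"
    unfolding hp using cz by (simp add: field_simps power_mult_distrib)
  have P2: "2 * q * (c * ch0 * cos ph) * (c * sh0 * sin ph) = kk * b2 * (2 * sin ph * cos ph)"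
    unfolding hq kk_def using cz by (simp add: field_simps power2_eq_square)
  have P3: "r * (c * sh0 * sin ph)^2 = kk * (a0 - a2) * (sin ph)^2"
    unfolding hr using cz by (simp add: field_simps power_mult_distrib)
  have P4: "2 * al0 * c * ch0 * cos ph * x0 = - kk * a1 * cos ph"
    unfolding hx kk_def al0_def using cz by (simp add: field_simps power2_eq_square)
  have P5: "2 * ga0 * c * sh0 * sin ph * y0 = - kk * b1 * sin ph"
    unfolding hy kk_def ga0_def using cz by (simp add: field_simps power2_eq_square)
  have "L ph = kk * ((a0 + a2) * (cos ph)^2 + b2 * (2 * sin ph * cos ph) + (a0 - a2) * (sin ph)^2 + a1 * cos ph + b1 * sin ph)"
    unfolding L_def P1 P2 P3 P4 P5 by (simp add: algebra_simps)
  also have "\<dots> = kk * TP" unfolding TP_def cos_double sin_double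
    by (subst trig_alg) simp_all
  finally have Leq: "L ph = kk * TP" .
  have gpos: "0 < g ph" by (rule g_pos)
  have "mu1L ph = - kk * TP / g ph" unfolding mu1L_def Leq by simp
  also have "\<dots> = TP * (g ph * e_h e0 ph) / g ph" unfolding g_eh kk_def by simp
  also have "\<dots> = TP * e_h e0 ph" using gpos by simp
  finally show ?thesis unfolding lhs by simp
qed

end

lemma abs_le_sum_helper: "\<bar>K * u\<bar> \<le> \<bar>K\<bar> * S" if "\<bar>u\<bar> \<le> S" for K u S :: real
  using that by (simp add: abs_mult mult_left_mono)

theorem proposition3:
  fixes e0 c :: real
  assumes "0 < e0" "e0 < 1" "0 < c"
  shows "\<exists>C \<delta>. \<delta> > 0 \<and> (\<forall>a0 a1 b1 a2 b2 :: real.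
           \<bar>a0\<bar> + \<bar>a1\<bar> + \<bar>b1\<bar> + \<bar>a2\<bar> + \<bar>b2\<bar> < \<delta> \<longrightarrow>
           (let mu1 = (\<lambda>\<phi>. a0 * e_h e0 \<phi> + a1 * e_tau1 e0 \<phi> + b1 * e_tau2 e0 \<phi>
                          + a2 * e_hr e0 \<phi> + b2 * e_r e0 \<phi>)
            in \<exists>mu. C1_periodic mu \<and> is_ellipse (perturbed_curve e0 c mu) \<and>
                    C1_norm (\<lambda>\<phi>. mu1 \<phi> - mu \<phi>) \<le> C * (C1_norm mu1)\<^sup>2))"
proof -
  interpret ell e0 c using assms by unfold_locales
  define KL where "KL = 8 * KA"
  define Cc where "Cc = (KD0 + KD1) * KL^2"
  define dd where "dd = eps0 / (KA + 1)"
  have dd_pos: "0 < dd" using eps0_pos KA_nonneg by (simp add: dd_def)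
  show ?thesis
  proof (rule exI[of _ Cc], rule exI[of _ dd], intro conjI allI impI dd_pos)
    fix a0 a1 b1 a2 b2 :: real
    assume small: "\<bar>a0\<bar> + \<bar>a1\<bar> + \<bar>b1\<bar> + \<bar>a2\<bar> + \<bar>b2\<bar> < dd"
    define p where "p = kk * (a0 + a2) / (c^2 * ch0^2)"
    define q where "q = - 2 * b2 / (c^2 * sh0^2)"
    define r where "r = kk * (a0 - a2) / (c^2 * sh0^2)"
    define x0 where "x0 = a1 * c * ch0^2 / sh0"
    define y0 where "y0 = b1 * c * ch0"
    define t where "t = \<bar>p\<bar> + \<bar>q\<bar> + \<bar>r\<bar> + \<bar>x0\<bar> + \<bar>y0\<bar>"
    define S where "S = \<bar>a0\<bar> + \<bar>a1\<bar> + \<bar>b1\<bar> + \<bar>a2\<bar> + \<bar>b2\<bar>"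
    have cz: "0 < c" "0 < ch0" "0 < sh0" using cpos ch0_pos sh0_pos by auto
    have s1: "\<bar>a0 + a2\<bar> \<le> S" unfolding S_def using abs_triangle_ineq[of a0 a2] by linarith
    have s2: "\<bar>b2\<bar> \<le> S" unfolding S_def by linarith
    have s3: "\<bar>a0 - a2\<bar> \<le> S" unfolding S_def using abs_triangle_ineq4[of a0 a2] by linarith
    have s4: "\<bar>a1\<bar> \<le> S" unfolding S_def by linarith
    have s5: "\<bar>b1\<bar> \<le> S" unfolding S_def by linarith
    have hp: "\<bar>p\<bar> \<le> (\<bar>kk\<bar> / (c^2 * ch0^2)) * S"
    proof -
      have "\<bar>p\<bar> = (\<bar>kk\<bar> / (c^2 * ch0^2)) * \<bar>a0 + a2\<bar>" unfolding p_def using cz by (simp add: abs_mult abs_divide)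
      also have "\<dots> \<le> (\<bar>kk\<bar> / (c^2 * ch0^2)) * S" by (rule mult_left_mono[OF s1]) (use cz in simp)
      finally show ?thesis .
    qed
    have hq: "\<bar>q\<bar> \<le> (2 / (c^2 * sh0^2)) * S"
    proof -
      have "\<bar>q\<bar> = (2 / (c^2 * sh0^2)) * \<bar>b2\<bar>" unfolding q_def using cz by (simp add: abs_mult abs_divide)
      also have "\<dots> \<le> (2 / (c^2 * sh0^2)) * S" by (rule mult_left_mono[OF s2]) (use cz in simp)
      finally show ?thesis .
    qed
    have hr: "\<bar>r\<bar> \<le> (\<bar>kk\<bar> / (c^2 * sh0^2)) * S"
    proof -
      have "\<bar>r\<bar> = (\<bar>kk\<bar> / (c^2 * sh0^2)) * \<bar>a0 - a2\<bar>" unfolding r_def using cz by (simp add: abs_mult abs_divide)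
      also have "\<dots> \<le> (\<bar>kk\<bar> / (c^2 * sh0^2)) * S" by (rule mult_left_mono[OF s3]) (use cz in simp)
      finally show ?thesis .
    qed
    have hx: "\<bar>x0\<bar> \<le> (c * ch0^2 / sh0) * S"
    proof -
      have "\<bar>x0\<bar> = (c * ch0^2 / sh0) * \<bar>a1\<bar>" unfolding x0_def using cz by (simp add: abs_mult abs_divide)
      also have "\<dots> \<le> (c * ch0^2 / sh0) * S" by (rule mult_left_mono[OF s4]) (use cz in simp)
      finally show ?thesis .
    qed
    have hy: "\<bar>y0\<bar> \<le> (c * ch0) * S"
    proof -
      have "\<bar>y0\<bar> = (c * ch0) * \<bar>b1\<bar>" unfolding y0_def using cz by (simp add: abs_mult abs_divide)
      also have "\<dots> \<le> (c * ch0) * S" by (rule mult_left_mono[OF s5]) (use cz in simp)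
      finally show ?thesis .
    qed
    have KAS: "KA * S = (\<bar>kk\<bar> / (c^2 * ch0^2)) * S + (2 / (c^2 * sh0^2)) * S + (\<bar>kk\<bar> / (c^2 * sh0^2)) * S
        + (c * ch0^2 / sh0) * S + (c * ch0) * S" unfolding KA_def by (simp add: algebra_simps)
    have tS: "t \<le> KA * S" unfolding t_def KAS using hp hq hr hx hy by linarith
    have tle: "t \<le> eps0"
    proof -
      have "KA * S \<le> KA * dd" using small KA_nonneg unfolding S_def by (intro mult_left_mono) auto
      also have "\<dots> = eps0 * (KA / (KA + 1))" unfolding dd_def by simp
      also have "\<dots> \<le> eps0 * 1" using KA_nonneg eps0_pos by (intro mult_left_mono) auto
      finally show ?thesis using tS by simp
    qed
    interpret E2: ell2 e0 c p q r x0 y0 t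
      using assms tle by unfold_locales (auto simp: t_def)
    define mu1 where "mu1 = (\<lambda>\<phi>. a0 * e_h e0 \<phi> + a1 * e_tau1 e0 \<phi> + b1 * e_tau2 e0 \<phi> + a2 * e_hr e0 \<phi> + b2 * e_r e0 \<phi>)"
    have m1: "mu1 ph = E2.mu1L ph" for ph
      unfolding mu1_def by (rule E2.mu1_identity) (simp_all add: p_def q_def r_def x0_def y0_def)
    have F_eq: "(\<lambda>\<phi>. mu1 \<phi> - E2.nu \<phi>) = (\<lambda>\<phi>. E2.mu1L \<phi> - E2.nu \<phi>)" using m1 by auto
    have dF: "deriv (\<lambda>\<phi>. mu1 \<phi> - E2.nu \<phi>) ph = E2.Dd ph" for ph
      unfolding F_eq by (rule DERIV_imp_deriv[OF E2.D_deriv])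
    have ne: "{0..2*pi} \<noteq> {}" by simp
    have sup1: "(SUP \<phi>\<in>{0..2*pi}. \<bar>mu1 \<phi> - E2.nu \<phi>\<bar>) \<le> KD0 * t^2"
      by (rule cSUP_least[OF ne]) (simp add: m1 E2.D_bnd)
    have sup2: "(SUP \<phi>\<in>{0..2*pi}. \<bar>deriv (\<lambda>\<phi>. mu1 \<phi> - E2.nu \<phi>) \<phi>\<bar>) \<le> KD1 * t^2"
      by (rule cSUP_least[OF ne]) (simp add: dF E2.Dd_bnd)
    have normF: "C1_norm (\<lambda>\<phi>. mu1 \<phi> - E2.nu \<phi>) \<le> (KD0 + KD1) * t^2"
      unfolding C1_norm_def using sup1 sup2 by (simp add: algebra_simps)
    have mu1b: "\<bar>mu1 ph\<bar> \<le> 1 + KD0 * t^2" for ph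
    proof -
      have "\<bar>mu1 ph\<bar> \<le> \<bar>E2.nu ph\<bar> + \<bar>mu1 ph - E2.nu ph\<bar>" by (rule abs_tri2[of "mu1 ph" "E2.nu ph", simplified add.commute])
      thus ?thesis using E2.nu_band1[of ph] E2.D_bnd[of ph] m1[of ph] by simp
    qed
    have bdd1: "bdd_above ((\<lambda>\<phi>. \<bar>mu1 \<phi>\<bar>) ` {0..2*pi})" by (rule bdd_aboveI2[of _ _ "1 + KD0 * t^2"]) (rule mu1b)
    have mu1_fun: "mu1 = (\<lambda>\<phi>. E2.nu \<phi> + (E2.mu1L \<phi> - E2.nu \<phi>))" using m1 by auto
    have dmu1: "deriv mu1 ph = E2.nud ph + E2.Dd ph" for ph
      unfolding mu1_fun by (rule DERIV_imp_deriv[OF DERIV_add[OF E2.nu_deriv E2.D_deriv]])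
    have nudb: "\<bar>E2.nud ph\<bar> \<le> KGp * 2 / gm" for ph
    proof -
      have "\<bar>E2.nud ph\<bar> \<le> KGp * (\<bar>E2.nu ph\<bar> + t) / gm" by (rule E2.nud_bnd)
      also have "\<dots> \<le> KGp * 2 / gm"
      proof (intro divide_right_mono mult_left_mono)
        show "\<bar>E2.nu ph\<bar> + t \<le> 2" using E2.nu_band1[of ph] E2.t_le1 by linarith
      qed (use KGp_nonneg gm_pos in auto)
      finally show ?thesis .
    qed
    have bdd2: "bdd_above ((\<lambda>\<phi>. \<bar>deriv mu1 \<phi>\<bar>) ` {0..2*pi})"
    proof (rule bdd_aboveI2[of _ _ "KGp * 2 / gm + KD1 * t^2"])
      fix ph :: real
      show "\<bar>deriv mu1 ph\<bar> \<le> KGp * 2 / gm + KD1 * t^2"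
        unfolding dmu1 using nudb[of ph] E2.Dd_bnd[of ph] abs_triangle_ineq[of "E2.nud ph" "E2.Dd ph"] by linarith
    qed
    have z: "(0::real) \<in> {0..2*pi}" by simp
    have sup2ge: "0 \<le> (SUP \<phi>\<in>{0..2*pi}. \<bar>deriv mu1 \<phi>\<bar>)"
      using cSUP_upper[OF z bdd2] by (rule order.trans[OF abs_ge_zero])
    have Mx: "\<bar>mu1 ph\<bar> \<le> C1_norm mu1" if "ph \<in> {0..2*pi}" for ph
      using cSUP_upper[OF that bdd1] sup2ge unfolding C1_norm_def by linarith
    define TP where "TP ph = a0 + a1 * cos ph + b1 * sin ph + a2 * cos (2 * ph) + b2 * sin (2 * ph)" for ph
    have TPb: "\<bar>TP ph\<bar> \<le> C1_norm mu1" if "ph \<in> {0..2*pi}" for ph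
    proof -
      have eq: "mu1 ph = TP ph * e_h e0 ph"
        unfolding mu1_def TP_def e_tau1_def e_tau2_def e_hr_def e_r_def by (simp add: algebra_simps)
      have "\<bar>TP ph\<bar> * 1 \<le> \<bar>TP ph\<bar> * e_h e0 ph" using eh_ge1[of ph] by (intro mult_left_mono) auto
      also have "\<dots> = \<bar>mu1 ph\<bar>" unfolding eq using eh_ge1[of ph] by (simp add: abs_mult)
      finally show ?thesis using Mx[OF that] by simp
    qed
    define N where "N = C1_norm mu1"
    have v0: "\<bar>a0 + a1 + a2\<bar> \<le> N" using TPb[of 0] unfolding TP_def N_def by simp
    have v1: "\<bar>a0 - a1 + a2\<bar> \<le> N" using TPb[of pi] unfolding TP_def N_def by simp
    have v2: "\<bar>a0 + b1 - a2\<bar> \<le> N" using TPb[of "pi/2"] unfolding TP_def N_def by simp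
    have c3: "cos (2 * (3/2 * pi)) = -1" "sin (2 * (3/2 * pi)) = 0"
    proof -
      have e: "2 * (3/2 * pi) = pi + 2 * pi" by simp
      show "cos (2 * (3/2 * pi)) = -1" "sin (2 * (3/2 * pi)) = 0" unfolding e by simp_all
    qed
    have e32: "3/2*pi = 3 * pi / 2" by simp
    have c32: "cos (3 * pi / 2) = 0" "sin (3 * pi / 2) = -1"
      using cos_3over2_pi sin_3over2_pi unfolding e32 by simp_all
    have v3: "\<bar>a0 - b1 - a2\<bar> \<le> N" using TPb[of "3/2 * pi"] c3 c32 unfolding TP_def N_def by simp
    have p4: "2 * (pi / 4) = pi / 2" by simp
    have v4: "\<bar>a0 + (a1 + b1) * (sqrt 2 / 2) + b2\<bar> \<le> N"
      using TPb[of "pi/4"] unfolding TP_def N_def p4 cos_45 sin_45 by (simp add: algebra_simps add_divide_distrib)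
    have sq: "\<bar>sqrt 2 / 2\<bar> \<le> 1"
    proof -
      have "sqrt 2 \<le> sqrt (2^2)" by (rule real_sqrt_le_mono) simp
      hence "sqrt 2 \<le> 2" by simp
      thus ?thesis by simp
    qed
    have A0: "\<bar>a0\<bar> \<le> N" "\<bar>a2\<bar> \<le> N" "\<bar>a1\<bar> \<le> N" "\<bar>b1\<bar> \<le> N" using v0 v1 v2 v3 by linarith+
    have "\<bar>(a1 + b1) * (sqrt 2 / 2)\<bar> \<le> (2 * N) * 1" by (rule abs_mul_le[OF _ sq]) (use A0 in linarith)
    hence A1: "\<bar>b2\<bar> \<le> 4 * N" using v4 A0 by linarith
    have SN: "S \<le> 8 * N" unfolding S_def using A0 A1 by linarith
    have t0: "0 \<le> t" unfolding t_def by simp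
    have tN: "t \<le> KL * N"
    proof -
      have "KA * S \<le> KA * (8 * N)" using SN KA_nonneg by (intro mult_left_mono) auto
      thus ?thesis using tS unfolding KL_def by simp
    qed
    have "t^2 \<le> (KL * N)^2" using t0 tN by (intro power_mono) auto
    hence "(KD0 + KD1) * t^2 \<le> (KD0 + KD1) * (KL * N)^2"
    proof (rule mult_left_mono)
      have "0 \<le> KD0" unfolding KD0_def using KR_nonneg gmin_pos by simp
      moreover have "0 \<le> KD1" unfolding KD1_def
        using KRp_nonneg KRm_nonneg KGp_nonneg gm_pos gmin_pos KR_nonneg Gd_nonneg by simp
      ultimately show "0 \<le> KD0 + KD1" by simp
    qed
    also have "\<dots> = Cc * N^2" unfolding Cc_def by (simp add: power_mult_distrib)
    finally have fin: "C1_norm (\<lambda>\<phi>. mu1 \<phi> - E2.nu \<phi>) \<le> Cc * (C1_norm mu1)^2" using normF unfolding N_def by simp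
    have "\<exists>mu. C1_periodic mu \<and> is_ellipse (perturbed_curve e0 c mu) \<and>
                    C1_norm (\<lambda>\<phi>. mu1 \<phi> - mu \<phi>) \<le> Cc * (C1_norm mu1)\<^sup>2"
      using E2.nu_C1 E2.is_ell fin by blast
    thus "let mu1 = (\<lambda>\<phi>. a0 * e_h e0 \<phi> + a1 * e_tau1 e0 \<phi> + b1 * e_tau2 e0 \<phi>
                          + a2 * e_hr e0 \<phi> + b2 * e_r e0 \<phi>)
            in \<exists>mu. C1_periodic mu \<and> is_ellipse (perturbed_curve e0 c mu) \<and>
                    C1_norm (\<lambda>\<phi>. mu1 \<phi> - mu \<phi>) \<le> Cc * (C1_norm mu1)\<^sup>2"
      by (simp only: Let_def mu1_def)
  qed
qed

end
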